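(* Let $\mathbb X$ be a basic space and $\mathcal D=(D,<,\rho)$ a computable partially ordered set. 1. Every partial function $F:\mathbb X\to D$ in $\mathrm{Max}_{\mathrm{PR}}[\mathbb X\to\mathcal D]\cap\mathrm{Min}_{\mathrm{PR}}[\mathbb X\to\mathcal D]$ is the restriction of a partial computable function $\mathbb X\to D$ to some $\Sigma^0_1\wedge\Pi^0_1$ subset of $\mathbb X$. In particular, every total function in $\mathrm{Max}_{\mathrm{PR}}[\mathbb X\to\mathcal D]\cap\mathrm{Min}_{\mathrm{PR}}[\mathbb X\to\mathcal D]$ is computable. 2. If $D$ has no maximal (resp. no minimal) element, then the restriction of any partial computable function $\mathbb X\to D$ to any $\Sigma^0_1\wedge\Pi^0_1$ subset of $\mathbb X$ is in $\mathrm{Max}_{\mathrm{PR}}[\mathbb X\to\mathcal D]$ (resp. $\mathrm{Min}_{\mathrm{PR}}[\mathbb X\to\mathcal D]$). 3. If $D$ has neither maximal nor minimal elements, then $\mathrm{Max}_{\mathrm{PR}}[\mathbb X\to\mathcal D]\cap\mathrm{Min}_{\mathrm{PR}}[\mathbb X\to\mathcal D]$ is exactly the family of restrictions of partial computable functions $\mathbb X\to D$ to $\Sigma^0_1\wedge\Pi^0_1$ subsets of $\mathbb X$.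
   Context: A basic space is a finite non-empty product of sets each of which is $\mathbb N$, $\mathbb Z$, or $A^*$ for some finite alphabet $A$. A computable partially ordered set is a triple $\mathcal D=(D,<,\rho)$ where $\rho:\mathbb N\to D$ is a bijection and $<$ is a strict partial order on $D$ with $\{(m,n):\rho(m)<\rho(n)\}$ computable; a partial function into $D$ is partial computable if its composition with $\rho^{-1}$ is. For a partial $f:\mathbb X\times\mathbb N\to D$ monotone increasing (resp. decreasing) in its second argument on its domain, $\max^{\mathcal D}f$ (resp. $\min^{\mathcal D}f$) is the partial function defined exactly at those $x$ for which $\{f(x,t):t\in\mathbb N,\ f(x,t)\text{ defined}\}$ is finite and non-empty, with value its maximum (resp. minimum) element. $\mathrm{Max}_{\mathrm{PR}}[\mathbb X\to\mathcal D]$ (resp. $\mathrm{Min}_{\mathrm{PR}}[\mathbb X\to\mathcal D]$) is the class of all $\max^{\mathcal D}f$ with $f$ partial computable and increasing in its second argument (resp. all $\min^{\mathcal D}f$ with $f$ partial computable and decreasing in its second argument). A set $Z\subseteq\mathbb X$ is $\Sigma^0_1\wedge\Pi^0_1$ if $Z=\{x:\exists t\,R(x,t)\wedge\forall t\,S(x,t)\}$ for computable $R,S\subseteq\mathbb X\times\mathbb N$. The restriction of a partial function $G$ to $Z$ is the partial function with domain $\mathrm{dom}(G)\cap Z$ agreeing with $G$ there. *)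

theory Defs
  imports Main "HOL-Library.Nat_Bijection"
begin

datatype recf = Zero | Succ | Proj nat | Comp recf "recf list" | Prec recf recf | Mn recf

inductive evalr :: "recf \<Rightarrow> nat list \<Rightarrow> nat \<Rightarrow> bool" where
  zero: "evalr Zero xs 0"
| succ: "evalr Succ (x # xs) (Suc x)"
| proj: "i < length xs \<Longrightarrow> evalr (Proj i) xs (xs ! i)"
| comp: "length ys = length gs \<Longrightarrow> (\<forall>i<length gs. evalr (gs ! i) xs (ys ! i))
          \<Longrightarrow> evalr f ys z \<Longrightarrow> evalr (Comp f gs) xs z"
| prec0: "evalr f xs y \<Longrightarrow> evalr (Prec f g) (0 # xs) y"
| precS: "evalr (Prec f g) (n # xs) y \<Longrightarrow> evalr g (n # y # xs) z
          \<Longrightarrow> evalr (Prec f g) (Suc n # xs) z"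
| mn: "evalr f (n # xs) 0 \<Longrightarrow> (\<forall>m<n. \<exists>y. evalr f (m # xs) (Suc y))
          \<Longrightarrow> evalr (Mn f) xs n"

text \<open>Components: N, Z, or A* for the finite alphabet A = {0..<k}.\<close>
datatype bcomp = CN | CZ | CW nat
datatype bval = VN nat | VZ int | VW "nat list"

fun bval_in :: "bcomp \<Rightarrow> bval \<Rightarrow> bool" where
  "bval_in CN (VN _) = True"
| "bval_in CZ (VZ _) = True"
| "bval_in (CW k) (VW w) = (\<forall>a\<in>set w. a < k)"
| "bval_in _ _ = False"

definition basic_space :: "bcomp list \<Rightarrow> bool" where
  "basic_space X \<longleftrightarrow> X \<noteq> []"

definition space :: "bcomp list \<Rightarrow> bval list set" where
  "space X = {v. list_all2 bval_in X v}"

fun enc_val :: "bval \<Rightarrow> nat" where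
  "enc_val (VN n) = n"
| "enc_val (VZ i) = int_encode i"
| "enc_val (VW w) = list_encode w"

definition code :: "bval list \<Rightarrow> nat" where
  "code v = list_encode (map enc_val v)"

definition pcomp_on :: "bcomp list \<Rightarrow> (nat \<Rightarrow> 'd) \<Rightarrow> (bval list \<Rightarrow> 'd option) \<Rightarrow> bool" where
  "pcomp_on X \<rho> F \<longleftrightarrow> (\<exists>r. \<forall>x\<in>space X. \<forall>y. evalr r [code x] y \<longleftrightarrow> F x = Some (\<rho> y))"

definition pcomp2_on :: "bcomp list \<Rightarrow> (nat \<Rightarrow> 'd) \<Rightarrow> (bval list \<Rightarrow> nat \<Rightarrow> 'd option) \<Rightarrow> bool" where
  "pcomp2_on X \<rho> f \<longleftrightarrow>
     (\<exists>r. \<forall>x\<in>space X. \<forall>t y. evalr r [code x, t] y \<longleftrightarrow> f x t = Some (\<rho> y))"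

definition comprel2_on :: "bcomp list \<Rightarrow> (bval list \<Rightarrow> nat \<Rightarrow> bool) \<Rightarrow> bool" where
  "comprel2_on X R \<longleftrightarrow>
     (\<exists>r. \<forall>x\<in>space X. \<forall>t. evalr r [code x, t] (if R x t then 1 else 0))"

definition sigma1_pi1 :: "bcomp list \<Rightarrow> bval list set \<Rightarrow> bool" where
  "sigma1_pi1 X Z \<longleftrightarrow> Z \<subseteq> space X \<and>
     (\<exists>R S. comprel2_on X R \<and> comprel2_on X S \<and>
        (\<forall>x\<in>space X. x \<in> Z \<longleftrightarrow> (\<exists>t. R x t) \<and> (\<forall>t. S x t)))"

text \<open>Computable partially ordered set (D,<,rho) with D the whole type 'd.\<close>
definition comp_poset :: "('d \<Rightarrow> 'd \<Rightarrow> bool) \<Rightarrow> (nat \<Rightarrow> 'd) \<Rightarrow> bool" where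
  "comp_poset lt \<rho> \<longleftrightarrow> bij \<rho> \<and> (\<forall>d. \<not> lt d d) \<and>
     (\<forall>a b c. lt a b \<longrightarrow> lt b c \<longrightarrow> lt a c) \<and>
     (\<exists>r. \<forall>m n. evalr r [m, n] (if lt (\<rho> m) (\<rho> n) then 1 else 0))"

definition incr_on :: "bcomp list \<Rightarrow> ('d \<Rightarrow> 'd \<Rightarrow> bool) \<Rightarrow> (bval list \<Rightarrow> nat \<Rightarrow> 'd option) \<Rightarrow> bool" where
  "incr_on X lt f \<longleftrightarrow> (\<forall>x\<in>space X. \<forall>t t' d d'. t \<le> t' \<longrightarrow> f x t = Some d \<longrightarrow>
      f x t' = Some d' \<longrightarrow> d = d' \<or> lt d d')"

definition decr_on :: "bcomp list \<Rightarrow> ('d \<Rightarrow> 'd \<Rightarrow> bool) \<Rightarrow> (bval list \<Rightarrow> nat \<Rightarrow> 'd option) \<Rightarrow> bool" where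
  "decr_on X lt f \<longleftrightarrow> (\<forall>x\<in>space X. \<forall>t t' d d'. t \<le> t' \<longrightarrow> f x t = Some d \<longrightarrow>
      f x t' = Some d' \<longrightarrow> d = d' \<or> lt d' d)"

definition maxD :: "('d \<Rightarrow> 'd \<Rightarrow> bool) \<Rightarrow> (bval list \<Rightarrow> nat \<Rightarrow> 'd option) \<Rightarrow> bval list \<Rightarrow> 'd option" where
  "maxD lt f x = (let S = {d. \<exists>t. f x t = Some d} in
     if finite S \<and> S \<noteq> {} then Some (THE m. m \<in> S \<and> (\<forall>d\<in>S. d = m \<or> lt d m)) else None)"

definition minD :: "('d \<Rightarrow> 'd \<Rightarrow> bool) \<Rightarrow> (bval list \<Rightarrow> nat \<Rightarrow> 'd option) \<Rightarrow> bval list \<Rightarrow> 'd option" where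
  "minD lt f x = (let S = {d. \<exists>t. f x t = Some d} in
     if finite S \<and> S \<noteq> {} then Some (THE m. m \<in> S \<and> (\<forall>d\<in>S. d = m \<or> lt m d)) else None)"

definition MaxPR :: "bcomp list \<Rightarrow> ('d \<Rightarrow> 'd \<Rightarrow> bool) \<Rightarrow> (nat \<Rightarrow> 'd) \<Rightarrow> (bval list \<Rightarrow> 'd option) set" where
  "MaxPR X lt \<rho> = {F. \<exists>f. pcomp2_on X \<rho> f \<and> incr_on X lt f \<and>
      (\<forall>x\<in>space X. F x = maxD lt f x)}"

definition MinPR :: "bcomp list \<Rightarrow> ('d \<Rightarrow> 'd \<Rightarrow> bool) \<Rightarrow> (nat \<Rightarrow> 'd) \<Rightarrow> (bval list \<Rightarrow> 'd option) set" where
  "MinPR X lt \<rho> = {F. \<exists>f. pcomp2_on X \<rho> f \<and> decr_on X lt f \<and>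
      (\<forall>x\<in>space X. F x = minD lt f x)}"

definition RestrPC :: "bcomp list \<Rightarrow> (nat \<Rightarrow> 'd) \<Rightarrow> (bval list \<Rightarrow> 'd option) set" where
  "RestrPC X \<rho> = {F. \<exists>G Z. pcomp_on X \<rho> G \<and> sigma1_pi1 X Z \<and>
      (\<forall>x\<in>space X. F x = (if x \<in> Z then G x else None))}"

end

theory Submission
  imports Defs
begin


inductive_cases zeroE: "evalr Zero xs y"
inductive_cases succE: "evalr Succ xs y"
inductive_cases projE: "evalr (Proj i) xs y"
inductive_cases compE: "evalr (Comp f gs) xs y"
inductive_cases prec0E: "evalr (Prec f g) (0 # xs) y"
inductive_cases precSE: "evalr (Prec f g) (Suc n # xs) y"
inductive_cases mnE: "evalr (Mn f) xs y"

lemma evalr_det: "evalr r xs y \<Longrightarrow> evalr r xs y' \<Longrightarrow> y = y'"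
proof (induction arbitrary: y' rule: evalr.induct)
  case (zero xs) then show ?case by (auto elim: zeroE)
next
  case (succ x xs) then show ?case by (auto elim: succE)
next
  case (proj i xs) then show ?case by (auto elim: projE)
next
  case (comp ys gs xs f z)
  from comp.prems obtain ys' where l: "length ys' = length gs"
    and e: "\<forall>i<length gs. evalr (gs ! i) xs (ys' ! i)" and ef: "evalr f ys' y'"
    by (auto elim: compE)
  have "ys = ys'"
  proof (rule nth_equalityI)
    show "length ys = length ys'" using comp.hyps(1) l by simp
    fix i assume "i < length ys"
    then have "i < length gs" using comp.hyps(1) by simp
    then have "evalr (gs ! i) xs (ys ! i) \<and> (\<forall>x. evalr (gs ! i) xs x \<longrightarrow> ys ! i = x)"
      using comp.IH(1) by blast
    then show "ys ! i = ys' ! i" using e \<open>i < length gs\<close> by blast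
  qed
  then show ?case using comp ef by blast
next
  case (prec0 f xs y g)
  from prec0.prems have "evalr f xs y'" by (elim prec0E)
  then show ?case using prec0.IH by blast
next
  case (precS f g n xs y z)
  from precS.prems obtain y1 where "evalr (Prec f g) (n # xs) y1" "evalr g (n # y1 # xs) y'"
    by (auto elim: precSE)
  then show ?case using precS.IH by blast
next
  case (mn f n xs)
  from mn.prems have a: "evalr f (y' # xs) 0" and b: "\<forall>m<y'. \<exists>y. evalr f (m # xs) (Suc y)"
    by (auto elim: mnE)
  show ?case
  proof (rule ccontr)
    assume "n \<noteq> y'"
    then consider "n < y'" | "y' < n" by linarith
    then show False
    proof cases
      case 1 then obtain y where "evalr f (n # xs) (Suc y)" using b by blast
      then show False using mn.IH(1) by fastforce
    next
      case 2 then obtain y where "evalr f (y' # xs) (Suc y)" "\<forall>y''. evalr f (y' # xs) y'' \<longrightarrow> Suc y = y''"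
        using mn.IH(2) by blast
      then show False using a by fastforce
    qed
  qed
qed



fun iterp :: "(nat list \<Rightarrow> nat option) \<Rightarrow> (nat list \<Rightarrow> nat option) \<Rightarrow> nat \<Rightarrow> nat list \<Rightarrow> nat option" where
  "iterp F G 0 ys = F ys"
| "iterp F G (Suc j) ys = (case iterp F G j ys of None \<Rightarrow> None | Some y \<Rightarrow> G (j # y # ys))"

fun mns :: "(nat list \<Rightarrow> nat option) \<Rightarrow> nat list \<Rightarrow> nat \<Rightarrow> nat \<Rightarrow> nat option" where
  "mns F xs 0 m = None"
| "mns F xs (Suc c) m = (case F (m # xs) of None \<Rightarrow> None | Some 0 \<Rightarrow> Some m
     | Some (Suc _) \<Rightarrow> mns F xs c (Suc m))"

fun evb :: "nat \<Rightarrow> recf \<Rightarrow> nat list \<Rightarrow> nat option" where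
  "evb n Zero xs = Some 0"
| "evb n Succ xs = (case xs of [] \<Rightarrow> None | x # _ \<Rightarrow> Some (Suc x))"
| "evb n (Proj i) xs = (if i < length xs then Some (xs ! i) else None)"
| "evb n (Comp f gs) xs = (if (\<forall>g\<in>set gs. evb n g xs \<noteq> None)
      then evb n f (map (\<lambda>g. the (evb n g xs)) gs) else None)"
| "evb n (Prec f g) xs = (case xs of [] \<Rightarrow> None | m # ys \<Rightarrow> iterp (evb n f) (evb n g) m ys)"
| "evb n (Mn f) xs = mns (evb n f) xs n 0"

lemma iterp_sound:
  assumes "\<And>xs y. F xs = Some y \<Longrightarrow> evalr f xs y" "\<And>xs y. G xs = Some y \<Longrightarrow> evalr g xs y"
  shows "iterp F G j ys = Some y \<Longrightarrow> evalr (Prec f g) (j # ys) y"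
proof (induction j arbitrary: y)
  case 0 then show ?case using assms by (auto intro: evalr.prec0)
next
  case (Suc j) then show ?case using assms by (auto intro: evalr.precS split: option.splits)
qed

lemma mns_sound:
  "mns F xs c m = Some y \<Longrightarrow> (\<forall>m'<m. \<exists>z. F (m'#xs) = Some (Suc z)) \<Longrightarrow>
    F (y#xs) = Some 0 \<and> (\<forall>m'<y. \<exists>z. F(m'#xs) = Some (Suc z))"
proof (induction c arbitrary: m)
  case 0 then show ?case by simp
next
  case (Suc c)
  show ?case
  proof (cases "F (m # xs)")
    case None then show ?thesis using Suc by simp
  next
    case (Some a)
    show ?thesis
    proof (cases a)
      case 0 then show ?thesis using Suc Some by simp
    next
      case (Suc z)
      have "\<forall>m'<Suc m. \<exists>z. F (m'#xs) = Some (Suc z)"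
        using Suc.prems(2) Some Suc by (metis less_Suc_eq)
      then show ?thesis using Suc.IH Suc.prems(1) Some \<open>a = Suc z\<close> by simp
    qed
  qed
qed

lemma evb_sound: "evb n r xs = Some y \<Longrightarrow> evalr r xs y"
proof (induction r arbitrary: xs y)
  case Zero then show ?case by (auto intro: evalr.zero)
next
  case Succ then show ?case by (auto intro: evalr.succ split: list.splits)
next
  case (Proj i) then show ?case by (auto intro: evalr.proj split: if_splits)
next
  case (Comp f gs)
  from Comp.prems have a: "\<forall>g\<in>set gs. evb n g xs \<noteq> None"
    and b: "evb n f (map (\<lambda>g. the (evb n g xs)) gs) = Some y" by (auto split: if_splits)
  show ?case
  proof (rule evalr.comp)
    show "length (map (\<lambda>g. the (evb n g xs)) gs) = length gs" by simp
    show "\<forall>i<length gs. evalr (gs ! i) xs (map (\<lambda>g. the (evb n g xs)) gs ! i)"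
    proof (intro allI impI)
      fix i assume i: "i < length gs"
      then have "gs ! i \<in> set gs" by simp
      then show "evalr (gs ! i) xs (map (\<lambda>g. the (evb n g xs)) gs ! i)"
        using Comp.IH(2) a i by fastforce
    qed
    show "evalr f (map (\<lambda>g. the (evb n g xs)) gs) y" using Comp.IH(1) b by blast
  qed
next
  case (Prec f g)
  then show ?case
    by (auto split: list.splits intro: iterp_sound[of "evb n f" f "evb n g" g])
next
  case (Mn f)
  from mns_sound[OF Mn.prems[simplified]] have
    "evb n f (y # xs) = Some 0 \<and> (\<forall>m'<y. \<exists>z. evb n f (m' # xs) = Some (Suc z))" by simp
  then show ?case
  proof (intro evalr.mn)
    show "evalr f (y # xs) 0" using Mn.IH \<open>evb n f (y # xs) = Some 0 \<and> _\<close> by blast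
    show "\<forall>m<y. \<exists>ya. evalr f (m # xs) (Suc ya)"
      using Mn.IH \<open>evb n f (y # xs) = Some 0 \<and> _\<close> by blast
  qed
qed

lemma iterp_mono:
  assumes "\<And>xs y. F xs = Some y \<Longrightarrow> F' xs = Some y" "\<And>xs y. G xs = Some y \<Longrightarrow> G' xs = Some y"
  shows "iterp F G j ys = Some y \<Longrightarrow> iterp F' G' j ys = Some y"
proof (induction j arbitrary: y)
  case 0 then show ?case using assms by simp
next
  case (Suc j) then show ?case using assms by (auto split: option.splits)
qed

lemma mns_mono:
  assumes "\<And>xs y. F xs = Some y \<Longrightarrow> F' xs = Some y"
  shows "mns F xs c m = Some y \<Longrightarrow> c \<le> c' \<Longrightarrow> mns F' xs c' m = Some y"
proof (induction c arbitrary: m c')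
  case 0 then show ?case by simp
next
  case (Suc c)
  then obtain c'' where c': "c' = Suc c''" "c \<le> c''" by (cases c') auto
  show ?case
  proof (cases "F (m # xs)")
    case None then show ?thesis using Suc by simp
  next
    case (Some a)
    then have F': "F' (m#xs) = Some a" using assms by blast
    show ?thesis
    proof (cases a)
      case 0 then show ?thesis using Suc Some F' c' by simp
    next
      case (Suc z)
      then show ?thesis using Suc.IH[of "Suc m" c''] Suc.prems Some F' c' by simp
    qed
  qed
qed

lemma evb_mono: "evb n r xs = Some y \<Longrightarrow> n \<le> n' \<Longrightarrow> evb n' r xs = Some y"
proof (induction r arbitrary: xs y)
  case (Comp f gs)
  have eq: "\<forall>g\<in>set gs. evb n' g xs = evb n g xs"
    using Comp by (auto split: if_splits)
  then have "map (\<lambda>g. the (evb n' g xs)) gs = map (\<lambda>g. the (evb n g xs)) gs" by simp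
  moreover have "evb n' f (map (\<lambda>g. the (evb n g xs)) gs) = Some y" using Comp by (auto split: if_splits)
  ultimately have "evb n' f (map (\<lambda>g. the (evb n' g xs)) gs) = Some y" by metis
  then show ?case using eq Comp.prems by (auto split: if_splits)
next
  case (Prec f g)
  then show ?case by (auto split: list.splits intro: iterp_mono[of "evb n f" "evb n' f" "evb n g" "evb n' g"])
next
  case (Mn f)
  then show ?case using mns_mono[of "evb n f" "evb n' f"] by simp
qed auto

lemma mns_complete:
  "F (y#xs) = Some 0 \<Longrightarrow> (\<forall>m'<y. \<exists>z. F(m'#xs) = Some (Suc z)) \<Longrightarrow> m \<le> y \<Longrightarrow> y - m < c
   \<Longrightarrow> mns F xs c m = Some y"
proof (induction c arbitrary: m)
  case 0 then show ?case by simp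
next
  case (Suc c)
  show ?case
  proof (cases "m = y")
    case True then show ?thesis using Suc by simp
  next
    case False
    then obtain z where "F (m#xs) = Some (Suc z)" using Suc.prems by force
    then show ?thesis using Suc.IH[of "Suc m"] Suc.prems False by simp
  qed
qed

lemma evb_complete: "evalr r xs y \<Longrightarrow> \<exists>n. evb n r xs = Some y"
proof (induction rule: evalr.induct)
  case (zero xs) then show ?case by simp
next
  case (succ x xs) then show ?case by simp
next
  case (proj i xs) then show ?case by simp
next
  case (comp ys gs xs f z)
  have "\<forall>i<length gs. \<exists>n. evb n (gs ! i) xs = Some (ys ! i)" using comp.IH(1) by blast
  then obtain N where N: "\<And>i. i < length gs \<Longrightarrow> evb (N i) (gs ! i) xs = Some (ys ! i)" by metis
  obtain nf where nf: "evb nf f ys = Some z" using comp.IH(2) by blast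
  define M where "M = nf + (\<Sum>i<length gs. N i)"
  have NM: "evb M (gs ! i) xs = Some (ys ! i)" if "i < length gs" for i
  proof -
    have "N i \<le> (\<Sum>i<length gs. N i)" using that by (intro member_le_sum) auto
    then show ?thesis using N[OF that] evb_mono unfolding M_def by (metis trans_le_add2)
  qed
  have fM: "evb M f ys = Some z" using nf evb_mono unfolding M_def by (metis le_add1)
  have all: "\<forall>g\<in>set gs. evb M g xs \<noteq> None" using NM by (metis in_set_conv_nth option.distinct(1))
  have "map (\<lambda>g. the (evb M g xs)) gs = ys"
    using NM comp.hyps(1) by (auto intro!: nth_equalityI)
  then show ?case using all fM by (intro exI[of _ M]) simp
next
  case (prec0 f xs y g)
  then obtain n where "evb n f xs = Some y" by blast
  then show ?case by (intro exI[of _ n]) simp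
next
  case (precS f g n xs y z)
  obtain n1 where n1: "evb n1 (Prec f g) (n # xs) = Some y" using precS.IH(1) by blast
  obtain n2 where n2: "evb n2 g (n # y # xs) = Some z" using precS.IH(2) by blast
  have a: "evb (n1+n2) (Prec f g) (n # xs) = Some y" using evb_mono[OF n1] by simp
  have b: "evb (n1+n2) g (n # y # xs) = Some z" using evb_mono[OF n2] by simp
  show ?case using a b by (intro exI[of _ "n1+n2"]) simp
next
  case (mn f n xs)
  obtain n0 where n0: "evb n0 f (n # xs) = Some 0" using mn.IH(1) by blast
  have "\<forall>m<n. \<exists>k z. evb k f (m # xs) = Some (Suc z)" using mn.IH(2) by blast
  then obtain K Z where KZ: "\<And>m. m < n \<Longrightarrow> evb (K m) f (m # xs) = Some (Suc (Z m))" by metis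
  define M where "M = Suc n + n0 + (\<Sum>i<n. K i)"
  have KM: "evb M f (m # xs) = Some (Suc (Z m))" if "m < n" for m
  proof -
    have "K m \<le> (\<Sum>i<n. K i)" using that by (intro member_le_sum) auto
    then show ?thesis using KZ[OF that] evb_mono unfolding M_def by (metis trans_le_add2)
  qed
  have fM: "evb M f (n # xs) = Some 0" using n0 evb_mono unfolding M_def by (metis le_add2 add.assoc le_add1 trans_le_add1)
  have "mns (evb M f) xs M 0 = Some n"
    by (rule mns_complete) (use fM KM in \<open>auto simp: M_def\<close>)
  then show ?case by (intro exI[of _ M]) simp
qed

lemma evb_complete_mono: "evalr r xs y \<Longrightarrow> \<exists>n0. \<forall>n\<ge>n0. evb n r xs = Some y"
  using evb_complete evb_mono by blast



lemma comp2: "list_all2 (\<lambda>g y. evalr g xs y) gs ys \<Longrightarrow> evalr f ys z \<Longrightarrow> evalr (Comp f gs) xs z"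
  by (rule evalr.comp) (auto simp: list_all2_conv_all_nth)

lemma comp_inv: "evalr (Comp f gs) xs z \<Longrightarrow> \<exists>ys. list_all2 (\<lambda>g y. evalr g xs y) gs ys \<and> evalr f ys z"
  by (erule compE) (auto simp: list_all2_conv_all_nth, metis)

lemma ev_proj: "i < length xs \<Longrightarrow> xs ! i = y \<Longrightarrow> evalr (Proj i) xs y"
  using evalr.proj by blast

lemma projs: "list_all2 (\<lambda>g y. evalr g (pre @ ys) y) (map (\<lambda>i. Proj (i + length pre)) [0..<length ys]) ys"
  by (auto simp: list_all2_conv_all_nth intro!: ev_proj) (metis add.commute nth_append_length_plus)

lemma projs1: "list_all2 (\<lambda>g y. evalr g (a # ys) y) (map (\<lambda>i. Proj (i + 1)) [0..<length ys]) ys"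
  by (auto simp: list_all2_conv_all_nth intro!: ev_proj)
lemma projs2: "list_all2 (\<lambda>g y. evalr g (a # b # ys) y) (map (\<lambda>i. Proj (i + 2)) [0..<length ys]) ys"
  by (auto simp: list_all2_conv_all_nth intro!: ev_proj)
lemma projs3: "list_all2 (\<lambda>g y. evalr g (a # b # c # ys) y) (map (\<lambda>i. Proj (i + 3)) [0..<length ys]) ys"
  by (auto simp: list_all2_conv_all_nth intro!: ev_proj)
lemma projs0: "list_all2 (\<lambda>g y. evalr g ys y) (map (\<lambda>i. Proj i) [0..<length ys]) ys"
  by (auto simp: list_all2_conv_all_nth intro!: ev_proj)

lemma prec_seq: "evalr f ys (s 0) \<Longrightarrow> (\<forall>j<n. evalr g (j # s j # ys) (s (Suc j)))
   \<Longrightarrow> evalr (Prec f g) (n # ys) (s n)"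
proof (induction n)
  case 0 then show ?case by (auto intro: evalr.prec0)
next
  case (Suc n) then show ?case by (auto intro: evalr.precS)
qed

fun konst :: "nat \<Rightarrow> recf" where
  "konst 0 = Zero"
| "konst (Suc c) = Comp Succ [konst c]"

lemma ev_konst: "evalr (konst c) xs c"
proof (induction c)
  case 0 then show ?case by (auto intro: evalr.zero)
next
  case (Suc c) then show ?case by (auto intro!: comp2 evalr.succ)
qed

lemma ev_succ: "evalr g xs a \<Longrightarrow> evalr (Comp Succ [g]) xs (Suc a)"
  by (auto intro!: comp2 evalr.succ)

definition "ifzp = Prec (Proj 0) (Proj 3)"

lemma ev_ifzp: "evalr ifzp [a,b,c] (if a = 0 then b else c)"
proof -
  have "evalr (Prec (Proj 0) (Proj 3)) (a # [b,c]) ((\<lambda>n. if n = 0 then b else c) a)"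
    by (rule prec_seq) (auto intro!: ev_proj)
  then show ?thesis unfolding ifzp_def by simp
qed



definition "IFZ a b c = Comp ifzp [a, b, c]"

lemma ev_IFZ: "evalr a xs u \<Longrightarrow> evalr b xs v \<Longrightarrow> evalr c xs w \<Longrightarrow>
   evalr (IFZ a b c) xs (if u = 0 then v else w)"
  unfolding IFZ_def by (rule comp2[where ys="[u,v,w]"]) (use ev_ifzp[of u v w] in auto)

definition "predp = Prec Zero (Proj 0)"

lemma ev_predp: "evalr predp [n] (n - 1)"
proof -
  have "evalr (Prec Zero (Proj 0)) (n # []) ((\<lambda>n. n - 1) n)"
    by (rule prec_seq) (auto intro!: ev_proj evalr.zero)
  then show ?thesis unfolding predp_def by simp
qed

definition "PRED a = Comp predp [a]"

lemma ev_PRED: "evalr a xs u \<Longrightarrow> evalr (PRED a) xs (u - 1)"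
  unfolding PRED_def by (rule comp2[where ys="[u]"]) (use ev_predp[of u] in auto)

definition "monp = Prec (Proj 0) (PRED (Proj 1))"

lemma ev_monp: "evalr monp [b, a] (a - b)"
proof -
  have "evalr (Prec (Proj 0) (PRED (Proj 1))) (b # [a]) ((\<lambda>j. a - j) b)"
  proof (rule prec_seq)
    show "evalr (Proj 0) [a] (a - 0)" by (auto intro: ev_proj)
    show "\<forall>j<b. evalr (PRED (Proj 1)) [j, a - j, a] (a - Suc j)"
    proof (intro allI impI)
      fix j assume "j < b"
      have "evalr (PRED (Proj 1)) [j, a - j, a] (a - j - 1)" by (rule ev_PRED) (rule ev_proj; simp)
      then show "evalr (PRED (Proj 1)) [j, a - j, a] (a - Suc j)" by simp
    qed
  qed
  then show ?thesis unfolding monp_def by simp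
qed

definition "MON a b = Comp monp [b, a]"

lemma ev_MON: "evalr a xs u \<Longrightarrow> evalr b xs v \<Longrightarrow> evalr (MON a b) xs (u - v)"
  unfolding MON_def by (rule comp2[where ys="[v,u]"]) (auto intro: ev_monp)

definition "EQ a b = IFZ (MON a b) (IFZ (MON b a) (konst 1) Zero) Zero"

lemma ev_EQ: "evalr a xs u \<Longrightarrow> evalr b xs v \<Longrightarrow> evalr (EQ a b) xs (if u = v then 1 else 0)"
proof -
  assume "evalr a xs u" "evalr b xs v"
  then have "evalr (EQ a b) xs (if u - v = 0 then (if v - u = 0 then 1 else 0) else 0)"
    unfolding EQ_def by (intro ev_IFZ ev_MON ev_konst evalr.zero)
  moreover have "(if u - v = 0 then (if v - u = 0 then 1 else 0) else 0) = (if u = v then 1 else (0::nat))"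
    by auto
  ultimately show ?thesis by simp
qed

definition "NZ a = IFZ a Zero (konst 1)"

lemma ev_NZ: "evalr a xs u \<Longrightarrow> evalr (NZ a) xs (if u = 0 then 0 else 1)"
  unfolding NZ_def by (intro ev_IFZ ev_konst evalr.zero)

definition "AP f gs = Comp f gs"

definition BEX :: "nat \<Rightarrow> recf \<Rightarrow> recf" where
  "BEX k P = Prec (NZ (Comp P (Zero # map (\<lambda>i. Proj i) [0..<k])))
      (IFZ (Proj 1) (NZ (Comp P (Comp Succ [Proj 0] # map (\<lambda>i. Proj (i+2)) [0..<k]))) (konst 1))"

definition BALL :: "nat \<Rightarrow> recf \<Rightarrow> recf" where
  "BALL k P = Prec (NZ (Comp P (Zero # map (\<lambda>i. Proj i) [0..<k])))
      (IFZ (Proj 1) Zero (NZ (Comp P (Comp Succ [Proj 0] # map (\<lambda>i. Proj (i+2)) [0..<k]))))"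

lemma projs2': "list_all2 (\<lambda>g y. evalr g (a # b # ys) y) (map (\<lambda>i. Proj (Suc (Suc i))) [0..<length ys]) ys"
  by (auto simp: list_all2_conv_all_nth intro!: ev_proj)

lemma ev_base: "length ys = k \<Longrightarrow> evalr P (0 # ys) (p 0) \<Longrightarrow>
   evalr (Comp P (Zero # map (\<lambda>i. Proj i) [0..<k])) ys (p 0)"
  by (rule comp2[where ys="0 # ys"]) (auto intro: evalr.zero projs0)

lemma ev_step: "length ys = k \<Longrightarrow> evalr P (Suc j # ys) (p (Suc j)) \<Longrightarrow>
   evalr (Comp P (Comp Succ [Proj 0] # map (\<lambda>i. Proj (i+2)) [0..<k])) (j # s # ys) (p (Suc j))"
  by (rule comp2[where ys="Suc j # ys"]) (auto intro!: ev_succ ev_proj projs2')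

lemma ev_BEX:
  assumes "length ys = k" "\<And>t. evalr P (t # ys) (p t)"
  shows "evalr (BEX k P) (j # ys) (if \<exists>t\<le>j. p t \<noteq> 0 then 1 else 0)"
proof -
  have "evalr (BEX k P) (j # ys) ((\<lambda>j. if \<exists>t\<le>j. p t \<noteq> 0 then 1 else 0) j)"
    unfolding BEX_def
  proof (rule prec_seq)
    show "evalr (NZ (Comp P (Zero # map Proj [0..<k]))) ys (if \<exists>t\<le>0. p t \<noteq> 0 then 1 else 0)"
    proof -
      have e: "(if \<exists>t\<le>0. p t \<noteq> 0 then 1 else 0) = (if p 0 = 0 then 0 else (1::nat))" by auto
      show ?thesis unfolding e by (rule ev_NZ[OF ev_base[where p=p, OF assms(1) assms(2)[of 0]]])
    qed
    show "\<forall>j'<j. evalr (IFZ (Proj 1) (NZ (Comp P (Comp Succ [Proj 0] # map (\<lambda>i. Proj (i + 2)) [0..<k]))) (konst 1))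
         (j' # (if \<exists>t\<le>j'. p t \<noteq> 0 then 1 else 0) # ys) (if \<exists>t\<le>Suc j'. p t \<noteq> 0 then 1 else 0)"
    proof (intro allI impI)
      fix j' assume "j' < j"
      let ?s = "(if \<exists>t\<le>j'. p t \<noteq> 0 then 1 else 0) :: nat"
      have e: "(if ?s = 0 then (if p (Suc j') = 0 then 0 else 1) else 1) = (if \<exists>t\<le>Suc j'. p t \<noteq> 0 then 1 else 0)"
        by (auto simp: le_Suc_eq)
      show "evalr (IFZ (Proj 1) (NZ (Comp P (Comp Succ [Proj 0] # map (\<lambda>i. Proj (i + 2)) [0..<k]))) (konst 1))
         (j' # ?s # ys) (if \<exists>t\<le>Suc j'. p t \<noteq> 0 then 1 else 0)"
        unfolding e[symmetric] by (intro ev_IFZ ev_NZ ev_step assms ev_konst) (auto intro: ev_proj)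
    qed
  qed
  then show ?thesis by simp
qed

lemma ev_BALL:
  assumes "length ys = k" "\<And>t. evalr P (t # ys) (p t)"
  shows "evalr (BALL k P) (j # ys) (if \<forall>t\<le>j. p t \<noteq> 0 then 1 else 0)"
proof -
  have "evalr (BALL k P) (j # ys) ((\<lambda>j. if \<forall>t\<le>j. p t \<noteq> 0 then 1 else 0) j)"
    unfolding BALL_def
  proof (rule prec_seq)
    show "evalr (NZ (Comp P (Zero # map Proj [0..<k]))) ys (if \<forall>t\<le>0. p t \<noteq> 0 then 1 else 0)"
    proof -
      have e: "(if \<forall>t\<le>0. p t \<noteq> 0 then 1 else 0) = (if p 0 = 0 then 0 else (1::nat))" by auto
      show ?thesis unfolding e by (rule ev_NZ[OF ev_base[where p=p, OF assms(1) assms(2)[of 0]]])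
    qed
    show "\<forall>j'<j. evalr (IFZ (Proj 1) Zero (NZ (Comp P (Comp Succ [Proj 0] # map (\<lambda>i. Proj (i + 2)) [0..<k]))))
         (j' # (if \<forall>t\<le>j'. p t \<noteq> 0 then 1 else 0) # ys) (if \<forall>t\<le>Suc j'. p t \<noteq> 0 then 1 else 0)"
    proof (intro allI impI)
      fix j' assume "j' < j"
      let ?s = "(if \<forall>t\<le>j'. p t \<noteq> 0 then 1 else 0) :: nat"
      have e: "(if ?s = 0 then 0 else (if p (Suc j') = 0 then 0 else 1)) = (if \<forall>t\<le>Suc j'. p t \<noteq> 0 then 1 else 0)"
        by (auto simp: le_Suc_eq)
      show "evalr (IFZ (Proj 1) Zero (NZ (Comp P (Comp Succ [Proj 0] # map (\<lambda>i. Proj (i + 2)) [0..<k]))))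
         (j' # ?s # ys) (if \<forall>t\<le>Suc j'. p t \<noteq> 0 then 1 else 0)"
        unfolding e[symmetric] by (intro ev_IFZ ev_NZ ev_step assms evalr.zero) (auto intro: ev_proj)
    qed
  qed
  then show ?thesis by simp
qed

lemma ev_mn_iff:
  assumes "\<And>n. evalr P (n # xs) (p n)"
  shows "evalr (Mn P) xs y \<longleftrightarrow> (p y = 0 \<and> (\<forall>m<y. p m \<noteq> 0))"
proof
  assume "evalr (Mn P) xs y"
  then have a: "evalr P (y # xs) 0" and b: "\<forall>m<y. \<exists>z. evalr P (m # xs) (Suc z)" by (auto elim: mnE)
  have "p y = 0" using evalr_det[OF a assms] by simp
  moreover have "\<forall>m<y. p m \<noteq> 0" using b evalr_det assms by fastforce
  ultimately show "p y = 0 \<and> (\<forall>m<y. p m \<noteq> 0)" by blast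
next
  assume h: "p y = 0 \<and> (\<forall>m<y. p m \<noteq> 0)"
  show "evalr (Mn P) xs y"
  proof (rule evalr.mn)
    show "evalr P (y # xs) 0" using assms[of y] h by simp
    show "\<forall>m<y. \<exists>z. evalr P (m # xs) (Suc z)"
      using assms h by (metis not0_implies_Suc)
  qed
qed

lemma ev_mn_least:
  assumes "\<And>n. evalr P (n # xs) (p n)" "p n0 = 0"
  shows "evalr (Mn P) xs (LEAST n. p n = 0)"
  unfolding ev_mn_iff[OF assms(1)]
  by (metis (mono_tags, lifting) LeastI assms(2) not_less_Least)



fun enc :: "nat option \<Rightarrow> nat" where
  "enc None = 0" | "enc (Some y) = Suc y"

fun allnz :: "recf list \<Rightarrow> recf \<Rightarrow> recf" where
  "allnz [] e = e"
| "allnz (h # hs) e = IFZ h Zero (allnz hs e)"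

lemma ev_allnz: "list_all2 (\<lambda>h v. evalr h zs v) hs vs \<Longrightarrow> evalr e zs w \<Longrightarrow>
  evalr (allnz hs e) zs (if \<forall>v\<in>set vs. v \<noteq> 0 then w else 0)"
proof (induction hs arbitrary: vs)
  case Nil then show ?case by simp
next
  case (Cons h hs)
  then obtain v vs' where vs: "vs = v # vs'" "evalr h zs v" "list_all2 (\<lambda>h v. evalr h zs v) hs vs'"
    by (cases vs) auto
  have "evalr (allnz (h # hs) e) zs (if v = 0 then 0 else (if \<forall>v\<in>set vs'. v \<noteq> 0 then w else 0))"
  proof -
    have "evalr (allnz hs e) zs (if \<forall>v\<in>set vs'. v \<noteq> 0 then w else 0)" using Cons vs by blast
    from ev_IFZ[OF vs(2) evalr.zero this] show ?thesis by simp
  qed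
  then show ?case using vs by (cases "v = 0"; cases "\<forall>v\<in>set vs'. v \<noteq> 0") auto
qed

lemma la2_map: "(\<And>g. g \<in> set gs \<Longrightarrow> P (f g) (h g)) \<Longrightarrow> list_all2 P (map f gs) (map h gs)"
  by (induction gs) auto

fun stp :: "(nat list \<Rightarrow> nat option) \<Rightarrow> nat list \<Rightarrow> nat \<Rightarrow> nat" where
  "stp F xs 0 = 0"
| "stp F xs (Suc j) = (if stp F xs j = 0 then (case F (j#xs) of None \<Rightarrow> 1 | Some 0 \<Rightarrow> Suc (Suc j)
     | Some (Suc _) \<Rightarrow> 0) else stp F xs j)"

lemma stp_stay: "stp F xs j \<noteq> 0 \<Longrightarrow> stp F xs (j + d) = stp F xs j"
  by (induction d) auto

lemma mns_stp: "stp F xs m = 0 \<Longrightarrow>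
  mns F xs c m = (if stp F xs (m+c) \<ge> 2 then Some (stp F xs (m+c) - 2) else None)"
proof (induction c arbitrary: m)
  case 0 then show ?case by simp
next
  case (Suc c)
  show ?case
  proof (cases "F (m # xs)")
    case None
    then have "stp F xs (Suc m) = 1" using Suc.prems by simp
    then have "stp F xs (Suc m + c) = 1" using stp_stay[of F xs "Suc m" c] by simp
    then show ?thesis using None by simp
  next
    case (Some a)
    show ?thesis
    proof (cases a)
      case 0
      then have "stp F xs (Suc m) = Suc (Suc m)" using Suc.prems Some by simp
      then have "stp F xs (Suc m + c) = Suc (Suc m)" using stp_stay[of F xs "Suc m" c] by simp
      then show ?thesis using Some 0 by simp
    next
      case (Suc z)
      then have "stp F xs (Suc m) = 0" using Suc.prems Some by simp
      then show ?thesis using Suc.IH[of "Suc m"] Some \<open>a = Suc z\<close> by simp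
    qed
  qed
qed

fun clock :: "nat \<Rightarrow> recf \<Rightarrow> recf" where
  "clock k Zero = konst 1"
| "clock k Succ = (if k = 0 then Zero else Comp Succ [Comp Succ [Proj 1]])"
| "clock k (Proj i) = (if i < k then Comp Succ [Proj (Suc i)] else Zero)"
| "clock k (Comp f gs) = allnz (map (clock k) gs)
     (Comp (clock (length gs) f) (Proj 0 # map (\<lambda>g. PRED (clock k g)) gs))"
| "clock k (Prec f g) = (if k = 0 then Zero else
     Comp (Prec (clock (k-1) f) (IFZ (Proj 1) Zero
        (Comp (clock (Suc k) g) (Proj 2 # Proj 0 # PRED (Proj 1) # map (\<lambda>i. Proj (i+3)) [0..<k-1]))))
      (Proj 1 # Proj 0 # map (\<lambda>i. Proj (i+2)) [0..<k-1]))"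
| "clock k (Mn f) = PRED (Comp (Prec Zero
      (IFZ (Proj 1)
        (IFZ (Comp (clock (Suc k) f) (Proj 2 # Proj 0 # map (\<lambda>i. Proj (i+3)) [0..<k])) (konst 1)
          (IFZ (PRED (Comp (clock (Suc k) f) (Proj 2 # Proj 0 # map (\<lambda>i. Proj (i+3)) [0..<k])))
             (Comp Succ [Comp Succ [Proj 0]]) Zero))
        (Proj 1)))
      (Proj 0 # Proj 0 # map (\<lambda>i. Proj (i+1)) [0..<k]))"

lemma ev_PRED': "evalr a xs u \<Longrightarrow> v = u - 1 \<Longrightarrow> evalr (PRED a) xs v"
  using ev_PRED by blast

lemma pj1: "n = length ys \<Longrightarrow> list_all2 (\<lambda>g y. evalr g (a # ys) y) (map (\<lambda>i. Proj (i + 1)) [0..<n]) ys"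
  by (auto simp: list_all2_conv_all_nth intro!: ev_proj)
lemma pj1s: "n = length ys \<Longrightarrow> list_all2 (\<lambda>g y. evalr g (a # ys) y) (map (\<lambda>i. Proj (Suc i)) [0..<n]) ys"
  by (auto simp: list_all2_conv_all_nth intro!: ev_proj)
lemma pj2: "n = length ys \<Longrightarrow> list_all2 (\<lambda>g y. evalr g (a # b # ys) y) (map (\<lambda>i. Proj (i + 2)) [0..<n]) ys"
  by (auto simp: list_all2_conv_all_nth intro!: ev_proj)
lemma pj2s: "n = length ys \<Longrightarrow> list_all2 (\<lambda>g y. evalr g (a # b # ys) y) (map (\<lambda>i. Proj (Suc (Suc i))) [0..<n]) ys"
  by (auto simp: list_all2_conv_all_nth intro!: ev_proj)
lemma pj3: "n = length ys \<Longrightarrow> list_all2 (\<lambda>g y. evalr g (a # b # c # ys) y) (map (\<lambda>i. Proj (i + 3)) [0..<n]) ys"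
  by (auto simp: list_all2_conv_all_nth intro!: ev_proj)
lemma pj3s: "n = length ys \<Longrightarrow> list_all2 (\<lambda>g y. evalr g (a # b # c # ys) y) (map (\<lambda>i. Proj (Suc (Suc (Suc i)))) [0..<n]) ys"
  by (auto simp: list_all2_conv_all_nth intro!: ev_proj)

lemma projs1': "list_all2 (\<lambda>g y. evalr g (a # ys) y) (map (\<lambda>i. Proj (Suc i)) [0..<length ys]) ys"
  by (auto simp: list_all2_conv_all_nth intro!: ev_proj)
lemma projs3': "list_all2 (\<lambda>g y. evalr g (a # b # c # ys) y) (map (\<lambda>i. Proj (Suc (Suc (Suc i)))) [0..<length ys]) ys"
  by (auto simp: list_all2_conv_all_nth intro!: ev_proj)

theorem clock_ok: "length xs = k \<Longrightarrow> evalr (clock k r) (N # xs) (enc (evb N r xs))"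
proof (induction r arbitrary: k xs)
  case Zero then show ?case using ev_konst[of 1 "N#xs"] by simp
next
  case Succ then show ?case
    by (cases xs) (auto intro!: ev_succ ev_proj evalr.zero)
next
  case (Proj i) then show ?case
    by (auto intro!: ev_succ ev_proj evalr.zero)
next
  case (Comp f gs)
  let ?vs = "map (\<lambda>g. enc (evb N g xs)) gs"
  let ?ys = "map (\<lambda>g. enc (evb N g xs) - 1) gs"
  have l1: "list_all2 (\<lambda>h v. evalr h (N # xs) v) (map (clock k) gs) ?vs"
    by (rule la2_map) (use Comp in auto)
  have l2: "list_all2 (\<lambda>h v. evalr h (N # xs) v) (map (\<lambda>g. PRED (clock k g)) gs) ?ys"
  proof (rule la2_map)
    fix g assume "g \<in> set gs"
    then have "evalr (clock k g) (N # xs) (enc (evb N g xs))" using Comp by blast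
    from ev_PRED[OF this] show "evalr (PRED (clock k g)) (N # xs) (enc (evb N g xs) - 1)" .
  qed
  have inner: "evalr (Comp (clock (length gs) f) (Proj 0 # map (\<lambda>g. PRED (clock k g)) gs)) (N # xs)
      (enc (evb N f ?ys))"
    by (rule comp2[where ys="N # ?ys"]) (use l2 Comp.IH(1)[of "?ys" "length gs"] in \<open>auto intro: ev_proj\<close>)
  have "evalr (clock k (Comp f gs)) (N # xs) (if \<forall>v\<in>set ?vs. v \<noteq> 0 then enc (evb N f ?ys) else 0)"
    using ev_allnz[OF l1 inner] by simp
  moreover have "(if \<forall>v\<in>set ?vs. v \<noteq> 0 then enc (evb N f ?ys) else 0) = enc (evb N (Comp f gs) xs)"
  proof (cases "\<forall>g\<in>set gs. evb N g xs \<noteq> None")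
    case True
    then have m: "?ys = map (\<lambda>g. the (evb N g xs)) gs" by (auto intro!: map_cong)
    have "\<forall>v\<in>set ?vs. v \<noteq> 0" using True by auto
    then show ?thesis unfolding m using True by simp
  next
    case False
    then have "\<not> (\<forall>v\<in>set ?vs. v \<noteq> 0)" by (auto, metis enc.simps(1))
    then have c: "(\<forall>v\<in>set ?vs. v \<noteq> 0) = False" by blast
    have "evb N (Comp f gs) xs = None" using False by (simp only: evb.simps if_False)
    then show ?thesis unfolding c if_False by simp
  qed
  ultimately show ?case by simp
next
  case (Prec f g)
  show ?case
  proof (cases xs)
    case Nil then show ?thesis using Prec by (auto intro: evalr.zero)
  next
    case (Cons m ys)
    with Prec.prems have lys: "length ys = k - 1" and k: "k \<noteq> 0" by auto
    let ?s = "\<lambda>j. enc (iterp (evb N f) (evb N g) j ys)"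
    have "evalr (Prec (clock (k-1) f) (IFZ (Proj 1) Zero
        (Comp (clock (Suc k) g) (Proj 2 # Proj 0 # PRED (Proj 1) # map (\<lambda>i. Proj (i+3)) [0..<k-1]))))
        (m # N # ys) (?s m)"
    proof (rule prec_seq)
      show "evalr (clock (k - 1) f) (N # ys) (?s 0)" using Prec.IH(1)[OF lys] by simp
      show "\<forall>j<m. evalr (IFZ (Proj 1) Zero (Comp (clock (Suc k) g) (Proj 2 # Proj 0 # PRED (Proj 1) #
           map (\<lambda>i. Proj (i + 3)) [0..<k - 1]))) (j # ?s j # N # ys) (?s (Suc j))"
      proof (intro allI impI)
        fix j assume "j < m"
        have g: "evalr (Comp (clock (Suc k) g) (Proj 2 # Proj 0 # PRED (Proj 1) # map (\<lambda>i. Proj (i + 3)) [0..<k - 1]))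
            (j # ?s j # N # ys) (enc (evb N g (j # (?s j - 1) # ys)))"
          by (rule comp2[where ys="N # j # (?s j - 1) # ys"])
             (use Prec.IH(2)[of "j # (?s j - 1) # ys" "Suc k"] lys k
               in \<open>auto intro!: ev_proj ev_PRED' pj3 pj3s\<close>)
        have "evalr (IFZ (Proj 1) Zero (Comp (clock (Suc k) g) (Proj 2 # Proj 0 # PRED (Proj 1) #
           map (\<lambda>i. Proj (i + 3)) [0..<k - 1]))) (j # ?s j # N # ys)
           (if ?s j = 0 then 0 else enc (evb N g (j # (?s j - 1) # ys)))"
          by (intro ev_IFZ g evalr.zero) (auto intro: ev_proj)
        moreover have "(if ?s j = 0 then 0 else enc (evb N g (j # (?s j - 1) # ys))) = ?s (Suc j)"
          by (auto split: option.splits)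
        ultimately show "evalr (IFZ (Proj 1) Zero (Comp (clock (Suc k) g) (Proj 2 # Proj 0 # PRED (Proj 1) #
           map (\<lambda>i. Proj (i + 3)) [0..<k - 1]))) (j # ?s j # N # ys) (?s (Suc j))" by simp
      qed
    qed
    then have "evalr (clock k (Prec f g)) (N # m # ys) (?s m)"
      using k lys by (simp, intro comp2[where ys="m # N # ys"]) (auto intro!: ev_proj pj2 pj2s)
    then show ?thesis using Cons by simp
  qed
next
  case (Mn f)
  let ?F = "evb N f"
  let ?C = "Comp (clock (Suc k) f) (Proj 2 # Proj 0 # map (\<lambda>i. Proj (i+3)) [0..<k])"
  have C: "evalr ?C (j # s # N # xs) (enc (?F (j # xs)))" for j s
    by (rule comp2[where ys="N # j # xs"])
       (use Mn.IH[of "j # xs" "Suc k"] Mn.prems in \<open>auto intro!: ev_proj pj3 pj3s\<close>)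
  have "evalr (Prec Zero (IFZ (Proj 1) (IFZ ?C (konst 1) (IFZ (PRED ?C) (Comp Succ [Comp Succ [Proj 0]]) Zero)) (Proj 1)))
     (N # N # xs) (stp ?F xs N)"
  proof (rule prec_seq[where s="stp ?F xs"])
    show "evalr Zero (N # xs) (stp ?F xs 0)" by (simp add: evalr.zero)
    show "\<forall>j<N. evalr (IFZ (Proj 1) (IFZ ?C (konst 1) (IFZ (PRED ?C) (Comp Succ [Comp Succ [Proj 0]]) Zero)) (Proj 1))
       (j # stp ?F xs j # N # xs) (stp ?F xs (Suc j))"
    proof (intro allI impI)
      fix j
      have "evalr (IFZ (Proj 1) (IFZ ?C (konst 1) (IFZ (PRED ?C) (Comp Succ [Comp Succ [Proj 0]]) Zero)) (Proj 1))
       (j # stp ?F xs j # N # xs)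
       (if stp ?F xs j = 0 then (if enc (?F (j # xs)) = 0 then 1 else
          (if enc (?F (j # xs)) - 1 = 0 then Suc (Suc j) else 0)) else stp ?F xs j)"
        by (intro ev_IFZ C ev_konst ev_PRED ev_succ evalr.zero) (auto intro: ev_proj)
      moreover have "(if stp ?F xs j = 0 then (if enc (?F (j # xs)) = 0 then 1 else
          (if enc (?F (j # xs)) - 1 = 0 then Suc (Suc j) else 0)) else stp ?F xs j) = stp ?F xs (Suc j)"
        by (auto split: option.splits nat.splits)
      ultimately show "evalr (IFZ (Proj 1) (IFZ ?C (konst 1) (IFZ (PRED ?C) (Comp Succ [Comp Succ [Proj 0]]) Zero)) (Proj 1))
       (j # stp ?F xs j # N # xs) (stp ?F xs (Suc j))" by simp
    qed
  qed
  then have "evalr (Comp (Prec Zero (IFZ (Proj 1) (IFZ ?C (konst 1) (IFZ (PRED ?C) (Comp Succ [Comp Succ [Proj 0]]) Zero)) (Proj 1)))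
      (Proj 0 # Proj 0 # map (\<lambda>i. Proj (i+1)) [0..<k])) (N # xs) (stp ?F xs N)"
    by (intro comp2[where ys="N # N # xs"]) (use Mn.prems in \<open>auto intro!: ev_proj pj1 pj1s\<close>)
  then have "evalr (clock k (Mn f)) (N # xs) (stp ?F xs N - 1)"
    unfolding clock.simps by (rule ev_PRED)
  moreover have "stp ?F xs N - 1 = enc (evb N (Mn f) xs)"
    using mns_stp[of ?F xs 0 N] by (auto simp: numeral_2_eq_2)
  ultimately show ?case by simp
qed



section \<open>Order lemmas\<close>

lemma chain_max:
  assumes "finite S" "S \<noteq> {}" "\<forall>a\<in>S. \<forall>b\<in>S. a = b \<or> lt a b \<or> lt b a"
    "\<forall>a b c. lt a b \<longrightarrow> lt b c \<longrightarrow> lt a c"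
  shows "\<exists>m\<in>S. \<forall>d\<in>S. d = m \<or> lt d m"
  using assms
proof (induction S rule: finite_ne_induct)
  case (singleton x) then show ?case by simp
next
  case (insert x F)
  then obtain m where m: "m \<in> F" "\<forall>d\<in>F. d = m \<or> lt d m" by auto
  have "x = m \<or> lt x m \<or> lt m x" using insert.prems m by auto
  then show ?case
  proof (elim disjE)
    assume "x = m" then show ?thesis using m by (intro bexI[of _ m]) auto
  next
    assume "lt x m" then show ?thesis using m by (intro bexI[of _ m]) auto
  next
    assume h: "lt m x"
    have "\<forall>d\<in>insert x F. d = x \<or> lt d x"
    proof
      fix d assume "d \<in> insert x F"
      then have "d = x \<or> d = m \<or> lt d m" using m by auto
      then show "d = x \<or> lt d x" using h insert.prems(2) by blast
    qed
    then show ?thesis by blast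
  qed
qed

lemma greatest_unique:
  assumes "\<forall>d. \<not> lt d d" "\<forall>a b c. lt a b \<longrightarrow> lt b c \<longrightarrow> lt a c"
    "m \<in> S" "\<forall>d\<in>S. d = m \<or> lt d m" "m' \<in> S" "\<forall>d\<in>S. d = m' \<or> lt d m'"
  shows "m' = m"
  using assms by metis

lemma maxD_eq:
  assumes irr: "\<forall>d. \<not> lt d d" and tr: "\<forall>a b c. lt a b \<longrightarrow> lt b c \<longrightarrow> lt a c"
    and inc: "\<forall>t t' d d'. t \<le> t' \<longrightarrow> f x t = Some d \<longrightarrow> f x t' = Some d' \<longrightarrow> d = d' \<or> lt d d'"
    and t0: "f x t0 = Some d" and up: "\<forall>t d'. f x t = Some d' \<longrightarrow> d' = d \<or> lt d' d"
  shows "maxD lt f x = Some d"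
proof -
  let ?S = "{d. \<exists>t. f x t = Some d}"
  have sub: "?S \<subseteq> insert d ((\<lambda>t. the (f x t)) ` {..<t0})"
  proof
    fix d' assume "d' \<in> ?S"
    then obtain t where t: "f x t = Some d'" by auto
    show "d' \<in> insert d ((\<lambda>t. the (f x t)) ` {..<t0})"
    proof (cases "t < t0")
      case True then show ?thesis using t by force
    next
      case False
      then have "t0 \<le> t" by simp
      then have "d = d' \<or> lt d d'" using inc t0 t by blast
      moreover have "d' = d \<or> lt d' d" using up t by auto
      ultimately have "d' = d" using irr tr by blast
      then show ?thesis by simp
    qed
  qed
  have fin: "finite ?S" by (rule finite_subset[OF sub]) auto
  have ne: "?S \<noteq> {}" using t0 by auto
  have dS: "d \<in> ?S" using t0 by auto
  have "(THE m. m \<in> ?S \<and> (\<forall>d\<in>?S. d = m \<or> lt d m)) = d"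
  proof (rule the_equality)
    show "d \<in> ?S \<and> (\<forall>d'\<in>?S. d' = d \<or> lt d' d)" using dS up by auto
    fix m assume "m \<in> ?S \<and> (\<forall>d\<in>?S. d = m \<or> lt d m)"
    then show "m = d" using greatest_unique[OF irr tr, of d ?S m] dS up by auto
  qed
  then show ?thesis unfolding maxD_def Let_def using fin ne by simp
qed

lemma maxD_Some:
  assumes irr: "\<forall>d. \<not> lt d d" and tr: "\<forall>a b c. lt a b \<longrightarrow> lt b c \<longrightarrow> lt a c"
    and inc: "\<forall>t t' d d'. t \<le> t' \<longrightarrow> f x t = Some d \<longrightarrow> f x t' = Some d' \<longrightarrow> d = d' \<or> lt d d'"
    and mx: "maxD lt f x = Some m"
  shows "(\<exists>t. f x t = Some m) \<and> (\<forall>t d'. f x t = Some d' \<longrightarrow> d' = m \<or> lt d' m)"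
proof -
  let ?S = "{d. \<exists>t. f x t = Some d}"
  have fin: "finite ?S" and ne: "?S \<noteq> {}" using mx unfolding maxD_def Let_def by (auto split: if_splits)
  have ch: "\<forall>a\<in>?S. \<forall>b\<in>?S. a = b \<or> lt a b \<or> lt b a"
  proof (intro ballI)
    fix a b assume "a \<in> ?S" "b \<in> ?S"
    then obtain t t' where "f x t = Some a" "f x t' = Some b" by auto
    then show "a = b \<or> lt a b \<or> lt b a" using inc by (cases "t \<le> t'") (metis nat_le_linear)+
  qed
  obtain m0 where m0: "m0 \<in> ?S" "\<forall>d\<in>?S. d = m0 \<or> lt d m0" using chain_max[OF fin ne ch tr] by blast
  have "(THE m. m \<in> ?S \<and> (\<forall>d\<in>?S. d = m \<or> lt d m)) = m0"
  proof (rule the_equality)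
    show "m0 \<in> ?S \<and> (\<forall>d'\<in>?S. d' = m0 \<or> lt d' m0)" using m0 by auto
    fix m assume "m \<in> ?S \<and> (\<forall>d\<in>?S. d = m \<or> lt d m)"
    then show "m = m0" using greatest_unique[OF irr tr, of m0 ?S m] m0 by auto
  qed
  then have "m = m0" using mx fin ne unfolding maxD_def Let_def by simp
  then show ?thesis using m0 by auto
qed

lemma minD_flip: "minD lt f x = maxD (\<lambda>a b. lt b a) f x"
  unfolding minD_def maxD_def by simp

lemma decr_flip: "decr_on X lt f = incr_on X (\<lambda>a b. lt b a) f"
  unfolding decr_on_def incr_on_def by simp

lemma MinPR_flip: "MinPR X lt \<rho> = MaxPR X (\<lambda>a b. lt b a) \<rho>"
  unfolding MinPR_def MaxPR_def decr_flip minD_flip by simp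

lemma comp_poset_flip: "comp_poset lt \<rho> \<Longrightarrow> comp_poset (\<lambda>a b. lt b a) \<rho>"
proof -
  assume a: "comp_poset lt \<rho>"
  then obtain r where r: "\<forall>m n. evalr r [m, n] (if lt (\<rho> m) (\<rho> n) then 1 else 0)"
    unfolding comp_poset_def by blast
  have "\<forall>m n. evalr (Comp r [Proj 1, Proj 0]) [m, n] (if lt (\<rho> n) (\<rho> m) then 1 else 0)"
  proof (intro allI)
    fix m n
    show "evalr (Comp r [Proj 1, Proj 0]) [m, n] (if lt (\<rho> n) (\<rho> m) then 1 else 0)"
      by (rule comp2[where ys="[n,m]"]) (use r in \<open>auto intro!: ev_proj\<close>)
  qed
  then show ?thesis using a unfolding comp_poset_def by blast
qed



definition "Cf rf N c t = enc (evb N rf [c, t])"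

definition "CFp rf = Comp (clock 2 rf) [Proj 1, Proj 2, Proj 3]"
definition "CGp rg = Comp (clock 2 rg) [Proj 1, Proj 2, Proj 0]"
definition "Mp rf rg = IFZ (CFp rf) Zero (EQ (CFp rf) (CGp rg))"
definition "Ip rf rg = Comp (BEX 3 (Mp rf rg)) [Proj 1, Proj 1, Proj 2, Proj 0]"
definition "Rp rf rg = Comp (BEX 2 (Ip rf rg)) [Proj 1, Proj 1, Proj 0]"
definition "Qp rf rg rl = IFZ (CFp rf) (konst 1) (IFZ (CGp rg) (konst 1)
   (IFZ (EQ (CFp rf) (CGp rg)) (Comp rl [PRED (CFp rf), PRED (CGp rg)]) (konst 1)))"
definition "Jp rf rg rl = Comp (BALL 3 (Qp rf rg rl)) [Proj 1, Proj 1, Proj 2, Proj 0]"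
definition "Sp rf rg rl = Comp (BALL 2 (Jp rf rg rl)) [Proj 1, Proj 1, Proj 0]"
definition "Nst rf rg = Mn (IFZ (Comp (Rp rf rg) [Proj 1, Proj 0]) (konst 1) Zero)"
definition "Tst rf rg = Mn (IFZ (Ip rf rg) (konst 1) Zero)"
definition "Gp rf rg = PRED (Comp (clock 2 rf) [Nst rf rg, Proj 0, Comp (Tst rf rg) [Nst rf rg, Proj 0]])"

lemma comp2': "evalr f ys z \<Longrightarrow> list_all2 (\<lambda>g y. evalr g xs y) gs ys \<Longrightarrow> evalr (Comp f gs) xs z"
  using comp2 by blast

lemma ev_cong: "evalr r xs a \<Longrightarrow> a = b \<Longrightarrow> evalr r xs b" by simp

lemma ev_clock2: "evalr (clock 2 rf) [N, c, t] (Cf rf N c t)"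
  using clock_ok[where xs="[c,t]" and k=2 and N=N and r=rf] unfolding Cf_def by simp

lemma ev_CFp: "evalr (CFp rf) [s, N, c, t] (Cf rf N c t)"
  unfolding CFp_def by (rule comp2[where ys="[N,c,t]"]) (auto intro!: ev_proj ev_clock2)

lemma ev_CGp: "evalr (CGp rg) [s, N, c, t] (Cf rg N c s)"
  unfolding CGp_def by (rule comp2[where ys="[N,c,s]"]) (auto intro!: ev_proj ev_clock2)

definition "mv rf rg N c t s = (if Cf rf N c t = 0 then 0 else if Cf rf N c t = Cf rg N c s then 1 else (0::nat))"

lemma ev_Mp: "evalr (Mp rf rg) [s, N, c, t] (mv rf rg N c t s)"
  unfolding Mp_def mv_def by (intro ev_IFZ ev_CFp ev_CGp ev_EQ evalr.zero)

definition "Iv rf rg N c t = (if \<exists>s\<le>N. mv rf rg N c t s \<noteq> 0 then 1 else (0::nat))"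

lemma ev_BEX3: "evalr (BEX 3 (Mp rf rg)) [N, N, c, t] (Iv rf rg N c t)"
  unfolding Iv_def by (rule ev_BEX[where ys="[N,c,t]" and p="\<lambda>s. mv rf rg N c t s"]) (auto intro: ev_Mp)

lemma ev_Ip: "evalr (Ip rf rg) [t, N, c] (Iv rf rg N c t)"
  unfolding Ip_def by (rule comp2'[OF ev_BEX3]) (auto intro!: ev_proj)

definition "Rv rf rg c N = (\<exists>t\<le>N. Iv rf rg N c t \<noteq> 0)"

lemma ev_BEX2: "evalr (BEX 2 (Ip rf rg)) [N, N, c] (if Rv rf rg c N then 1 else 0)"
  unfolding Rv_def by (rule ev_BEX[where ys="[N,c]" and p="\<lambda>t. Iv rf rg N c t"]) (auto intro: ev_Ip)

lemma ev_Rp: "evalr (Rp rf rg) [c, N] (if Rv rf rg c N then 1 else 0)"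
  unfolding Rp_def by (rule comp2'[OF ev_BEX2]) (auto intro!: ev_proj)

lemma Rv_iff: "Rv rf rg c N \<longleftrightarrow> (\<exists>t\<le>N. \<exists>s\<le>N. Cf rf N c t \<noteq> 0 \<and> Cf rf N c t = Cf rg N c s)"
  unfolding Rv_def Iv_def mv_def by auto

definition "qv L rf rg N c t s = (if Cf rf N c t = 0 then (1::nat) else if Cf rg N c s = 0 then 1 else
   if Cf rf N c t = Cf rg N c s then 1 else L (Cf rf N c t - 1) (Cf rg N c s - 1))"

lemma ev_Qp: assumes "\<And>m n. evalr rl [m, n] (L m n)" shows "evalr (Qp rf rg rl) [s, N, c, t] (qv L rf rg N c t s)"
proof -
  have l: "evalr (Comp rl [PRED (CFp rf), PRED (CGp rg)]) [s, N, c, t] (L (Cf rf N c t - 1) (Cf rg N c s - 1))"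
    by (rule comp2'[OF assms]) (auto intro!: ev_PRED' ev_CFp ev_CGp)
  have "evalr (Qp rf rg rl) [s, N, c, t] (if Cf rf N c t = 0 then 1 else if Cf rg N c s = 0 then 1 else
     if (if Cf rf N c t = Cf rg N c s then 1 else 0) = (0::nat) then L (Cf rf N c t - 1) (Cf rg N c s - 1) else 1)"
    unfolding Qp_def by (intro ev_IFZ ev_CFp ev_CGp ev_EQ ev_konst l)
  then show ?thesis by (rule ev_cong) (simp add: qv_def)
qed

definition "Jv L rf rg N c t = (if \<forall>s\<le>N. qv L rf rg N c t s \<noteq> 0 then 1 else (0::nat))"

lemma ev_Jp: assumes "\<And>m n. evalr rl [m, n] (L m n)" shows "evalr (Jp rf rg rl) [t, N, c] (Jv L rf rg N c t)"
proof -
  have b: "evalr (BALL 3 (Qp rf rg rl)) [N,N,c,t] (Jv L rf rg N c t)"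
    unfolding Jv_def by (rule ev_BALL[where ys="[N,c,t]" and p="\<lambda>s. qv L rf rg N c t s"]) (auto intro: ev_Qp[OF assms])
  show ?thesis unfolding Jp_def by (rule comp2'[OF b]) (auto intro!: ev_proj)
qed

definition "Sv L rf rg c N = (\<forall>t\<le>N. Jv L rf rg N c t \<noteq> 0)"

lemma ev_Sp: assumes "\<And>m n. evalr rl [m, n] (L m n)" shows "evalr (Sp rf rg rl) [c, N] (if Sv L rf rg c N then 1 else 0)"
proof -
  have b: "evalr (BALL 2 (Jp rf rg rl)) [N,N,c] (if Sv L rf rg c N then 1 else 0)"
    unfolding Sv_def by (rule ev_BALL[where ys="[N,c]" and p="\<lambda>t. Jv L rf rg N c t"]) (auto intro: ev_Jp[OF assms])
  show ?thesis unfolding Sp_def by (rule comp2'[OF b]) (auto intro!: ev_proj)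
qed

lemma Sv_iff: "Sv L rf rg c N \<longleftrightarrow> (\<forall>t\<le>N. \<forall>s\<le>N. Cf rf N c t \<noteq> 0 \<longrightarrow> Cf rg N c s \<noteq> 0 \<longrightarrow>
   Cf rf N c t = Cf rg N c s \<or> L (Cf rf N c t - 1) (Cf rg N c s - 1) \<noteq> 0)"
proof -
  have q: "qv L rf rg N c t s \<noteq> 0 \<longleftrightarrow> (Cf rf N c t \<noteq> 0 \<longrightarrow> Cf rg N c s \<noteq> 0 \<longrightarrow>
   Cf rf N c t = Cf rg N c s \<or> L (Cf rf N c t - 1) (Cf rg N c s - 1) \<noteq> 0)" for t s
    unfolding qv_def by simp
  have j: "Jv L rf rg N c t \<noteq> 0 \<longleftrightarrow> (\<forall>s\<le>N. qv L rf rg N c t s \<noteq> 0)" for t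
    unfolding Jv_def by simp
  show ?thesis unfolding Sv_def j q ..
qed

lemma ev_Nst: "evalr (Nst rf rg) [c] n \<longleftrightarrow> Rv rf rg c n \<and> (\<forall>m<n. \<not> Rv rf rg c m)"
proof -
  have "evalr (IFZ (Comp (Rp rf rg) [Proj 1, Proj 0]) (konst 1) Zero) (m # [c])
     (if (if Rv rf rg c m then 1 else 0) = (0::nat) then 1 else 0)" for m
    by (intro ev_IFZ ev_konst evalr.zero comp2'[OF ev_Rp]) (auto intro!: ev_proj)
  from ev_mn_iff[OF this] show ?thesis unfolding Nst_def by auto
qed

lemma ev_Tst: "evalr (Tst rf rg) [N, c] t \<longleftrightarrow> Iv rf rg N c t \<noteq> 0 \<and> (\<forall>m<t. Iv rf rg N c m = 0)"
proof -
  have "evalr (IFZ (Ip rf rg) (konst 1) Zero) (m # [N, c]) (if Iv rf rg N c m = 0 then 1 else 0)" for m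
    by (intro ev_IFZ ev_konst evalr.zero ev_Ip)
  from ev_mn_iff[OF this] show ?thesis unfolding Tst_def by auto
qed

lemma least_props: "\<exists>n::nat. P n \<Longrightarrow> P (LEAST n. P n) \<and> (\<forall>m<(LEAST n. P n). \<not> P m)"
  by (metis LeastI_ex not_less_Least)

definition "Nv rf rg c = (LEAST N. Rv rf rg c N)"
definition "Tv rf rg c = (LEAST t. Iv rf rg (Nv rf rg c) c t \<noteq> 0)"
definition "Gv rf rg c = Cf rf (Nv rf rg c) c (Tv rf rg c) - 1"

lemma ev_Gp: "evalr (Gp rf rg) [c] y \<longleftrightarrow> (\<exists>N. Rv rf rg c N) \<and> y = Gv rf rg c"
proof
  assume e: "evalr (Gp rf rg) [c] y"
  have "\<exists>ys. list_all2 (\<lambda>g y. evalr g [c] y) [Comp (clock 2 rf) [Nst rf rg, Proj 0, Comp (Tst rf rg) [Nst rf rg, Proj 0]]] ys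
     \<and> evalr predp ys y"
    using e unfolding Gp_def PRED_def by (rule comp_inv)
  then obtain z where z: "evalr (Comp (clock 2 rf) [Nst rf rg, Proj 0, Comp (Tst rf rg) [Nst rf rg, Proj 0]]) [c] z"
    by (auto simp: list_all2_Cons1)
  from comp_inv[OF z] obtain n where "evalr (Nst rf rg) [c] n" by (auto simp: list_all2_Cons1)
  then have ex: "\<exists>N. Rv rf rg c N" using ev_Nst by blast
  have "evalr (Gp rf rg) [c] (Gv rf rg c)"
  proof -
    have n: "evalr (Nst rf rg) [c] (Nv rf rg c)"
      unfolding ev_Nst Nv_def using least_props[OF ex] .
    have "Rv rf rg c (Nv rf rg c)" unfolding Nv_def using least_props[OF ex] by blast
    then have ex2: "\<exists>t. Iv rf rg (Nv rf rg c) c t \<noteq> 0" unfolding Rv_def by blast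
    have t: "evalr (Tst rf rg) [Nv rf rg c, c] (Tv rf rg c)"
      unfolding ev_Tst Tv_def using least_props[OF ex2] by blast
    show ?thesis unfolding Gp_def Gv_def
      by (intro ev_PRED comp2[where ys="[Nv rf rg c, c, Tv rf rg c]"])
         (auto intro!: ev_clock2 n ev_proj comp2[where ys="[Nv rf rg c, c]"] t)
  qed
  then show "(\<exists>N. Rv rf rg c N) \<and> y = Gv rf rg c" using ex evalr_det e by blast
next
  assume h: "(\<exists>N. Rv rf rg c N) \<and> y = Gv rf rg c"
  then have ex: "\<exists>N. Rv rf rg c N" by blast
  have n: "evalr (Nst rf rg) [c] (Nv rf rg c)"
    unfolding ev_Nst Nv_def using least_props[OF ex] .
  have "Rv rf rg c (Nv rf rg c)" unfolding Nv_def using least_props[OF ex] by blast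
  then have ex2: "\<exists>t. Iv rf rg (Nv rf rg c) c t \<noteq> 0" unfolding Rv_def by blast
  have t: "evalr (Tst rf rg) [Nv rf rg c, c] (Tv rf rg c)"
    unfolding ev_Tst Tv_def using least_props[OF ex2] by blast
  show "evalr (Gp rf rg) [c] y" unfolding Gp_def h[THEN conjunct2] Gv_def
    by (intro ev_PRED comp2[where ys="[Nv rf rg c, c, Tv rf rg c]"])
       (auto intro!: ev_clock2 n ev_proj comp2[where ys="[Nv rf rg c, c]"] t)
qed



lemma Cf_sound:
  assumes "\<forall>t y. evalr rf [c, t] y \<longleftrightarrow> ff t = Some (\<rho> y)" "Cf rf N c t = Suc a"
  shows "ff t = Some (\<rho> a)"
proof -
  have "evb N rf [c, t] = Some a" using assms(2) unfolding Cf_def by (cases "evb N rf [c, t]") auto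
  then have "evalr rf [c, t] a" by (rule evb_sound)
  then show ?thesis using assms(1) by blast
qed

lemma Cf_complete:
  assumes "bij \<rho>" "\<forall>t y. evalr rf [c, t] y \<longleftrightarrow> ff t = Some (\<rho> y)" "ff t = Some d"
  shows "\<exists>a N0. d = \<rho> a \<and> (\<forall>N\<ge>N0. Cf rf N c t = Suc a)"
proof -
  obtain a where a: "d = \<rho> a" using assms(1) by (metis bij_pointE)
  then have "evalr rf [c, t] a" using assms(2,3) by blast
  then obtain N0 where "\<forall>N\<ge>N0. evb N rf [c, t] = Some a" using evb_complete_mono by blast
  then have "\<forall>N\<ge>N0. Cf rf N c t = Suc a" unfolding Cf_def by simp
  then show ?thesis using a by blast
qed

lemma R_iff:
  assumes bij: "bij \<rho>" and hf: "\<forall>t y. evalr rf [c, t] y \<longleftrightarrow> ff t = Some (\<rho> y)"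
    and hg: "\<forall>t y. evalr rg [c, t] y \<longleftrightarrow> gg t = Some (\<rho> y)"
  shows "(\<exists>N. Rv rf rg c N) \<longleftrightarrow> (\<exists>t s d. ff t = Some d \<and> gg s = Some d)"
proof
  assume "\<exists>N. Rv rf rg c N"
  then obtain N t s where "Cf rf N c t \<noteq> 0" "Cf rf N c t = Cf rg N c s" unfolding Rv_iff by blast
  then obtain a where "Cf rf N c t = Suc a" "Cf rg N c s = Suc a" by (metis not0_implies_Suc)
  then show "\<exists>t s d. ff t = Some d \<and> gg s = Some d" using Cf_sound[OF hf] Cf_sound[OF hg] by blast
next
  assume "\<exists>t s d. ff t = Some d \<and> gg s = Some d"
  then obtain t s d where "ff t = Some d" "gg s = Some d" by blast
  then obtain a N1 b N2 where a: "d = \<rho> a" "\<forall>N\<ge>N1. Cf rf N c t = Suc a"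
    and b: "d = \<rho> b" "\<forall>N\<ge>N2. Cf rg N c s = Suc b"
    using Cf_complete[OF bij hf] Cf_complete[OF bij hg] by metis
  have ab: "a = b" using a b bij by (metis bij_pointE)
  define N where "N = max (max N1 N2) (max t s)"
  have "Cf rf N c t = Suc a" "Cf rg N c s = Suc a" using a b ab unfolding N_def by auto
  moreover have "t \<le> N" "s \<le> N" unfolding N_def by auto
  ultimately have "Rv rf rg c N" unfolding Rv_iff by fastforce
  then show "\<exists>N. Rv rf rg c N" by blast
qed

lemma S_iff:
  assumes bij: "bij \<rho>" and hf: "\<forall>t y. evalr rf [c, t] y \<longleftrightarrow> ff t = Some (\<rho> y)"
    and hg: "\<forall>t y. evalr rg [c, t] y \<longleftrightarrow> gg t = Some (\<rho> y)"
    and L: "\<forall>m n. L m n = (if lt (\<rho> m) (\<rho> n) then 1 else 0)"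
  shows "(\<forall>N. Sv L rf rg c N) \<longleftrightarrow> (\<forall>t s d e. ff t = Some d \<longrightarrow> gg s = Some e \<longrightarrow> d = e \<or> lt d e)"
proof
  assume S: "\<forall>N. Sv L rf rg c N"
  show "\<forall>t s d e. ff t = Some d \<longrightarrow> gg s = Some e \<longrightarrow> d = e \<or> lt d e"
  proof (intro allI impI)
    fix t s d e assume "ff t = Some d" "gg s = Some e"
    then obtain a N1 b N2 where a: "d = \<rho> a" "\<forall>N\<ge>N1. Cf rf N c t = Suc a"
      and b: "e = \<rho> b" "\<forall>N\<ge>N2. Cf rg N c s = Suc b"
      using Cf_complete[OF bij hf] Cf_complete[OF bij hg] by metis
    define N where "N = max (max N1 N2) (max t s)"
    have cf: "Cf rf N c t = Suc a" "Cf rg N c s = Suc b" using a b unfolding N_def by auto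
    have "t \<le> N" "s \<le> N" unfolding N_def by auto
    then have "Suc a = Suc b \<or> L a b \<noteq> 0" using S[rule_format, of N] cf unfolding Sv_iff by fastforce
    then show "d = e \<or> lt d e" using a b L by (auto split: if_splits)
  qed
next
  assume h: "\<forall>t s d e. ff t = Some d \<longrightarrow> gg s = Some e \<longrightarrow> d = e \<or> lt d e"
  show "\<forall>N. Sv L rf rg c N" unfolding Sv_iff
  proof (intro allI impI)
    fix N t s assume "t \<le> N" "s \<le> N" "Cf rf N c t \<noteq> 0" "Cf rg N c s \<noteq> 0"
    then obtain a b where ab: "Cf rf N c t = Suc a" "Cf rg N c s = Suc b" by (metis not0_implies_Suc)
    then have "ff t = Some (\<rho> a)" "gg s = Some (\<rho> b)" using Cf_sound[OF hf] Cf_sound[OF hg] by blast+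
    then have "\<rho> a = \<rho> b \<or> lt (\<rho> a) (\<rho> b)" using h by blast
    then have "a = b \<or> lt (\<rho> a) (\<rho> b)" using bij by (metis bij_pointE)
    then show "Cf rf N c t = Cf rg N c s \<or> L (Cf rf N c t - 1) (Cf rg N c s - 1) \<noteq> 0"
      using ab L by auto
  qed
qed

lemma part1:
  assumes cp: "comp_poset lt \<rho>" and FM: "F \<in> MaxPR X lt \<rho>" and Fm: "F \<in> MinPR X lt \<rho>"
  shows "F \<in> RestrPC X \<rho>"
proof -
  from cp have bij: "bij \<rho>" and irr: "\<forall>d. \<not> lt d d" and tr: "\<forall>a b c. lt a b \<longrightarrow> lt b c \<longrightarrow> lt a c"
    unfolding comp_poset_def by blast+
  from cp obtain rl where rl0: "\<forall>m n. evalr rl [m, n] (if lt (\<rho> m) (\<rho> n) then 1 else 0)"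
    unfolding comp_poset_def by blast
  have firr: "\<forall>d. \<not> (\<lambda>a b. lt b a) d d" using irr by blast
  have ftr: "\<forall>a b c. (\<lambda>a b. lt b a) a b \<longrightarrow> (\<lambda>a b. lt b a) b c \<longrightarrow> (\<lambda>a b. lt b a) a c" using tr by blast
  from FM obtain f where pf: "pcomp2_on X \<rho> f" and incf: "incr_on X lt f"
    and Ff: "\<forall>x\<in>space X. F x = maxD lt f x" unfolding MaxPR_def by blast
  from Fm obtain g where pg: "pcomp2_on X \<rho> g" and incg: "incr_on X (\<lambda>a b. lt b a) g"
    and Fg: "\<forall>x\<in>space X. F x = maxD (\<lambda>a b. lt b a) g x" unfolding MinPR_flip MaxPR_def by blast
  from pf obtain rf where rf: "\<forall>x\<in>space X. \<forall>t y. evalr rf [code x, t] y \<longleftrightarrow> f x t = Some (\<rho> y)"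
    unfolding pcomp2_on_def by blast
  from pg obtain rg where rg: "\<forall>x\<in>space X. \<forall>t y. evalr rg [code x, t] y \<longleftrightarrow> g x t = Some (\<rho> y)"
    unfolding pcomp2_on_def by blast
  define L where "L m n = (if lt (\<rho> m) (\<rho> n) then 1 else (0::nat))" for m n
  have rl: "evalr rl [m, n] (L m n)" for m n using rl0 unfolding L_def by blast
  have Ldef: "\<forall>m n. L m n = (if lt (\<rho> m) (\<rho> n) then 1 else 0)" unfolding L_def by blast
  define R where "R x N = Rv rf rg (code x) N" for x N
  define S where "S x N = Sv L rf rg (code x) N" for x N
  define Z where "Z = {x \<in> space X. (\<exists>N. R x N) \<and> (\<forall>N. S x N)}"
  define G where "G x = (if \<exists>N. Rv rf rg (code x) N then Some (\<rho> (Gv rf rg (code x))) else None)" for x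
  have pG: "pcomp_on X \<rho> G"
    unfolding pcomp_on_def
  proof (intro exI[of _ "Gp rf rg"] ballI allI)
    fix x y
    have "Gv rf rg (code x) = y \<longleftrightarrow> \<rho> (Gv rf rg (code x)) = \<rho> y" using bij by (metis bij_pointE)
    then show "evalr (Gp rf rg) [code x] y \<longleftrightarrow> G x = Some (\<rho> y)" unfolding ev_Gp G_def by auto
  qed
  have z1: "Z \<subseteq> space X" unfolding Z_def by blast
  have z2: "comprel2_on X R" unfolding comprel2_on_def R_def by (intro exI[of _ "Rp rf rg"] ballI allI ev_Rp)
  have z3: "comprel2_on X S" unfolding comprel2_on_def S_def by (intro exI[of _ "Sp rf rg rl"] ballI allI ev_Sp rl)
  have z4: "\<forall>x\<in>space X. (x \<in> Z) = ((\<exists>t. R x t) \<and> (\<forall>t. S x t))" unfolding Z_def by blast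
  have sZ: "sigma1_pi1 X Z" unfolding sigma1_pi1_def using z1 z2 z3 z4 by blast
  have main: "F x = (if x \<in> Z then G x else None)" if x: "x \<in> space X" for x
  proof -
    have hf: "\<forall>t y. evalr rf [code x, t] y \<longleftrightarrow> f x t = Some (\<rho> y)" using rf x by blast
    have hg: "\<forall>t y. evalr rg [code x, t] y \<longleftrightarrow> g x t = Some (\<rho> y)" using rg x by blast
    have incfx: "\<forall>t t' d d'. t \<le> t' \<longrightarrow> f x t = Some d \<longrightarrow> f x t' = Some d' \<longrightarrow> d = d' \<or> lt d d'"
      using incf x unfolding incr_on_def by blast
    have incgx: "\<forall>t t' d d'. t \<le> t' \<longrightarrow> g x t = Some d \<longrightarrow> g x t' = Some d' \<longrightarrow> d = d' \<or> lt d' d"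
      using incg x unfolding incr_on_def by blast
    note Ri = R_iff[OF bij hf hg] and Si = S_iff[OF bij hf hg Ldef]
    show ?thesis
    proof (cases "x \<in> Z")
      case True
      then have exR: "\<exists>N. Rv rf rg (code x) N" and allS: "\<forall>N. Sv L rf rg (code x) N"
        unfolding Z_def R_def S_def by auto
      let ?c = "code x"
      have "Rv rf rg ?c (Nv rf rg ?c)" unfolding Nv_def using least_props[OF exR] by blast
      then have ex2: "\<exists>t. Iv rf rg (Nv rf rg ?c) ?c t \<noteq> 0" unfolding Rv_def by blast
      have "Iv rf rg (Nv rf rg ?c) ?c (Tv rf rg ?c) \<noteq> 0" unfolding Tv_def using least_props[OF ex2] by blast
      then obtain s where "Cf rf (Nv rf rg ?c) ?c (Tv rf rg ?c) \<noteq> 0"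
        "Cf rf (Nv rf rg ?c) ?c (Tv rf rg ?c) = Cf rg (Nv rf rg ?c) ?c s"
        unfolding Iv_def mv_def by (auto split: if_splits)
      then obtain a where a: "Cf rf (Nv rf rg ?c) ?c (Tv rf rg ?c) = Suc a" "Cf rg (Nv rf rg ?c) ?c s = Suc a"
        by (metis not0_implies_Suc)
      have fa: "f x (Tv rf rg ?c) = Some (\<rho> a)" using Cf_sound[OF hf a(1)] .
      have ga: "g x s = Some (\<rho> a)" using Cf_sound[OF hg a(2)] .
      have Ga: "G x = Some (\<rho> a)" unfolding G_def Gv_def using exR a by simp
      have le: "\<forall>t s d e. f x t = Some d \<longrightarrow> g x s = Some e \<longrightarrow> d = e \<or> lt d e" using allS Si by blast
      have "maxD lt f x = Some (\<rho> a)"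
        by (rule maxD_eq[where f=f and x=x, OF irr tr incfx fa]) (use le ga in blast)
      then show ?thesis using Ff x Ga True by simp
    next
      case False
      have "F x = None"
      proof (rule ccontr)
        assume "F x \<noteq> None"
        then obtain m where m: "F x = Some m" by blast
        have mf: "(\<exists>t. f x t = Some m) \<and> (\<forall>t d'. f x t = Some d' \<longrightarrow> d' = m \<or> lt d' m)"
          by (rule maxD_Some[where f=f and x=x, OF irr tr incfx]) (use m Ff x in simp)
        have incgx': "\<forall>t t' d d'. t \<le> t' \<longrightarrow> g x t = Some d \<longrightarrow> g x t' = Some d' \<longrightarrow> d = d' \<or> (\<lambda>a b. lt b a) d d'"
          using incgx by simp
        have mg: "(\<exists>t. g x t = Some m) \<and> (\<forall>t d'. g x t = Some d' \<longrightarrow> d' = m \<or> (\<lambda>a b. lt b a) d' m)"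
          by (rule maxD_Some[where f=g and x=x, OF firr ftr incgx']) (use m Fg x in simp)
        have "\<exists>N. Rv rf rg (code x) N" unfolding Ri using mf mg by blast
        moreover have "\<forall>N. Sv L rf rg (code x) N" unfolding Si
        proof (intro allI impI)
          fix t s d e assume "f x t = Some d" "g x s = Some e"
          then have "d = m \<or> lt d m" "e = m \<or> lt m e" using mf mg by auto
          then show "d = e \<or> lt d e" using tr by blast
        qed
        ultimately have "x \<in> Z" unfolding Z_def R_def S_def using x by blast
        then show False using False by blast
      qed
      then show ?thesis using False by simp
    qed
  qed
  show ?thesis unfolding RestrPC_def using pG sZ main by blast
qed



definition "nxp rl = Mn (IFZ (Comp rl [Proj 1, Proj 0]) (konst 1) Zero)"
definition "itp rl = Prec (Proj 0) (Comp (nxp rl) [Proj 1])"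
definition "Ap rR = Comp (BEX 1 (Comp rR [Proj 1, Proj 0])) [Proj 1, Proj 0]"
definition "Bp rS = Comp (BALL 1 (Comp rS [Proj 1, Proj 0])) [Proj 1, Proj 0]"
definition "Db = IFZ (Proj 2) Zero (IFZ (Proj 1) (konst 1) Zero)"
definition "Dv rR rS = Comp (Mn Db) [Ap rR, Bp rS]"
definition "Hp rl = IFZ (Proj 1) (Comp (itp rl) [Comp Succ [Proj 2], Proj 0]) (Proj 0)"
definition "fp rG rR rS rl = Comp (Hp rl) [Comp rG [Proj 0], Bp rS, Proj 1, Dv rR rS]"

lemma ev_nxp:
  assumes rl: "\<And>m n. evalr rl [m, n] (L m n)" and ex: "\<exists>n. L m n \<noteq> 0"
  shows "evalr (nxp rl) [m] (LEAST n. L m n \<noteq> 0)"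
proof -
  have b: "evalr (IFZ (Comp rl [Proj 1, Proj 0]) (konst 1) Zero) (n # [m]) (if L m n = 0 then 1 else 0)" for n
    by (intro ev_IFZ ev_konst evalr.zero comp2'[OF rl]) (auto intro!: ev_proj)
  obtain n0 where "L m n0 \<noteq> 0" using ex by blast
  then have z: "(if L m n0 = 0 then 1 else 0) = (0::nat)" by simp
  have e: "(LEAST n. (if L m n = 0 then 1 else 0) = (0::nat)) = (LEAST n. L m n \<noteq> 0)"
    by (rule arg_cong[where f=Least]) auto
  from ev_mn_least[OF b z] show ?thesis unfolding nxp_def e .
qed

lemma ev_itp:
  assumes nx: "\<And>m. evalr (nxp rl) [m] (nx m)"
  shows "evalr (itp rl) [k, y] ((nx ^^ k) y)"
proof -
  have "evalr (Prec (Proj 0) (Comp (nxp rl) [Proj 1])) (k # [y]) ((\<lambda>k. (nx ^^ k) y) k)"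
  proof (rule prec_seq)
    show "evalr (Proj 0) [y] ((nx ^^ 0) y)" by (auto intro: ev_proj)
    show "\<forall>j<k. evalr (Comp (nxp rl) [Proj 1]) [j, (nx ^^ j) y, y] ((nx ^^ Suc j) y)"
      by (auto intro!: comp2'[OF nx] ev_proj)
  qed
  then show ?thesis unfolding itp_def by simp
qed

lemma ev_Ap:
  assumes "\<And>t. evalr rR [c, t] (if R t then 1 else 0)"
  shows "evalr (Ap rR) [c, t] (if \<exists>t'\<le>t. R t' then 1 else 0)"
proof -
  have P: "evalr (Comp rR [Proj 1, Proj 0]) (t' # [c]) (if R t' then 1 else 0)" for t'
    by (rule comp2'[OF assms]) (auto intro!: ev_proj)
  have "evalr (BEX 1 (Comp rR [Proj 1, Proj 0])) (t # [c]) (if \<exists>t'\<le>t. (if R t' then 1 else 0) \<noteq> (0::nat) then 1 else 0)"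
    by (rule ev_BEX[where k=1 and ys="[c]" and p="\<lambda>t'. if R t' then 1 else 0", OF _ P]) simp
  then have "evalr (BEX 1 (Comp rR [Proj 1, Proj 0])) [t, c] (if \<exists>t'\<le>t. R t' then 1 else 0)" by (rule ev_cong) auto
  then show ?thesis unfolding Ap_def by (rule comp2') (auto intro!: ev_proj)
qed

lemma ev_Bp:
  assumes "\<And>t. evalr rS [c, t] (if S t then 1 else 0)"
  shows "evalr (Bp rS) [c, t] (if \<forall>t'\<le>t. S t' then 1 else 0)"
proof -
  have P: "evalr (Comp rS [Proj 1, Proj 0]) (t' # [c]) (if S t' then 1 else 0)" for t'
    by (rule comp2'[OF assms]) (auto intro!: ev_proj)
  have "evalr (BALL 1 (Comp rS [Proj 1, Proj 0])) (t # [c]) (if \<forall>t'\<le>t. (if S t' then 1 else 0) \<noteq> (0::nat) then 1 else 0)"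
    by (rule ev_BALL[where k=1 and ys="[c]" and p="\<lambda>t'. if S t' then 1 else 0", OF _ P]) simp
  then have "evalr (BALL 1 (Comp rS [Proj 1, Proj 0])) [t, c] (if \<forall>t'\<le>t. S t' then 1 else 0)" by (rule ev_cong) auto
  then show ?thesis unfolding Bp_def by (rule comp2') (auto intro!: ev_proj)
qed

lemma ev_Dv:
  assumes "evalr (Ap rR) [c, t] a" "evalr (Bp rS) [c, t] b"
  shows "evalr (Dv rR rS) [c, t] w \<longleftrightarrow> (b = 0 \<or> a \<noteq> 0) \<and> w = 0"
proof -
  have db: "evalr Db (n # [a, b]) (if b = 0 then 0 else if a = 0 then 1 else 0)" for n
    unfolding Db_def by (intro ev_IFZ ev_konst evalr.zero ev_proj) auto
  note mi = ev_mn_iff[OF db]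
  show ?thesis
  proof
    assume "evalr (Dv rR rS) [c, t] w"
    then obtain ys where ys: "list_all2 (\<lambda>g y. evalr g [c, t] y) [Ap rR, Bp rS] ys" "evalr (Mn Db) ys w"
      unfolding Dv_def by (blast dest: comp_inv)
    then have "ys = [a, b]" using assms evalr_det by (auto simp: list_all2_Cons1)
    then show "(b = 0 \<or> a \<noteq> 0) \<and> w = 0" using ys(2) mi by (auto split: if_splits)
  next
    assume "(b = 0 \<or> a \<noteq> 0) \<and> w = 0"
    then have "evalr (Mn Db) [a, b] w" using mi by auto
    then show "evalr (Dv rR rS) [c, t] w" unfolding Dv_def by (rule comp2') (auto intro: assms)
  qed
qed



lemma ev_fp:
  assumes rl: "\<And>m n. evalr rl [m, n] (L m n)" and nx: "\<And>m. \<exists>n. L m n \<noteq> 0"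
    and rG: "\<And>y. evalr rG [c] y \<longleftrightarrow> Gc = Some y"
    and rR: "\<And>t. evalr rR [c, t] (if R t then 1 else 0)"
    and rS: "\<And>t. evalr rS [c, t] (if S t then 1 else 0)"
  shows "evalr (fp rG rR rS rl) [c, t] z \<longleftrightarrow>
    (\<exists>y. Gc = Some y \<and> ((\<forall>t'\<le>t. S t') \<longrightarrow> (\<exists>t'\<le>t. R t')) \<and>
       z = (if \<forall>t'\<le>t. S t' then y else ((\<lambda>m. LEAST n. L m n \<noteq> 0) ^^ Suc t) y))"
    (is "?L \<longleftrightarrow> ?R")
proof -
  let ?nx = "\<lambda>m. LEAST n. L m n \<noteq> 0"
  let ?a = "if \<exists>t'\<le>t. R t' then 1 else (0::nat)"
  let ?b = "if \<forall>t'\<le>t. S t' then 1 else (0::nat)"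
  have A: "evalr (Ap rR) [c, t] ?a" by (rule ev_Ap) (rule rR)
  have B: "evalr (Bp rS) [c, t] ?b" by (rule ev_Bp) (rule rS)
  have nxe: "evalr (nxp rl) [m] (?nx m)" for m by (rule ev_nxp[OF rl nx])
  have it: "evalr (itp rl) [k, y] ((?nx ^^ k) y)" for k y by (rule ev_itp[OF nxe])
  have constr: "evalr (fp rG rR rS rl) [c, t] z'" if y: "Gc = Some y" and cond: "(\<forall>t'\<le>t. S t') \<longrightarrow> (\<exists>t'\<le>t. R t')"
      and z: "z' = (if \<forall>t'\<le>t. S t' then y else (?nx ^^ Suc t) y)" for y z'
  proof -
    have g: "evalr (Comp rG [Proj 0]) [c, t] y" by (rule comp2'[where ys="[c]"]) (use rG y in \<open>auto intro!: ev_proj\<close>)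
    have d: "evalr (Dv rR rS) [c, t] 0" unfolding ev_Dv[OF A B] using cond by auto
    have hp: "evalr (Hp rl) [y, ?b, t, 0] (if ?b = 0 then (?nx ^^ Suc t) y else y)"
      unfolding Hp_def by (intro ev_IFZ ev_proj comp2'[OF it]) (auto intro!: ev_proj ev_succ)
    have "evalr (fp rG rR rS rl) [c, t] (if ?b = 0 then (?nx ^^ Suc t) y else y)"
      unfolding fp_def by (rule comp2'[OF hp]) (simp only: list_all2_Cons list_all2_Nil, intro conjI g B ev_proj d TrueI, simp_all)
    then show ?thesis by (rule ev_cong) (use z in auto)
  qed
  show ?thesis
  proof
    assume e: ?L
    then obtain ys where ys: "list_all2 (\<lambda>g y. evalr g [c, t] y) [Comp rG [Proj 0], Bp rS, Proj 1, Dv rR rS] ys"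
      unfolding fp_def by (blast dest: comp_inv)
    then obtain y b t' w where ys': "evalr (Comp rG [Proj 0]) [c, t] y" "evalr (Dv rR rS) [c, t] w"
      by (auto simp: list_all2_Cons1)
    from comp_inv[OF ys'(1)] obtain y1 where "evalr (Proj 0) [c, t] y1" "evalr rG [y1] y"
      by (auto simp: list_all2_Cons1)
    moreover have "evalr (Proj 0) [c, t] c" by (rule ev_proj) auto
    ultimately have "evalr rG [c] y" using evalr_det[of "Proj 0" "[c,t]" y1 c] by auto
    then have y: "Gc = Some y" using rG by blast
    have cond: "(\<forall>t'\<le>t. S t') \<longrightarrow> (\<exists>t'\<le>t. R t')" using ys'(2) unfolding ev_Dv[OF A B] by (auto split: if_splits)
    have "evalr (fp rG rR rS rl) [c, t] (if \<forall>t'\<le>t. S t' then y else (?nx ^^ Suc t) y)"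
      by (rule constr[OF y cond refl])
    then show ?R using y cond evalr_det[OF e] by blast
  next
    assume ?R then show ?L using constr by blast
  qed
qed



lemma chain_lt:
  assumes tr: "\<forall>a b c. lt a b \<longrightarrow> lt b c \<longrightarrow> lt a c" and st: "\<And>m. lt (\<rho> m) (\<rho> (nx m))"
  shows "j < k \<Longrightarrow> lt (\<rho> ((nx ^^ j) y)) (\<rho> ((nx ^^ k) y))"
proof (induction k)
  case 0 then show ?case by simp
next
  case (Suc k)
  have s: "lt (\<rho> ((nx ^^ k) y)) (\<rho> ((nx ^^ Suc k) y))" using st by simp
  show ?case
  proof (cases "j = k")
    case True then show ?thesis using s by simp
  next
    case False then have "j < k" using Suc.prems by simp
    then show ?thesis using Suc.IH s tr by blast
  qed
qed

lemma part3:
  assumes cp: "comp_poset lt \<rho>" and nomax: "\<forall>d. \<exists>e. lt d e" and FR: "F \<in> RestrPC X \<rho>"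
  shows "F \<in> MaxPR X lt \<rho>"
proof -
  from cp have bij: "bij \<rho>" and irr: "\<forall>d. \<not> lt d d" and tr: "\<forall>a b c. lt a b \<longrightarrow> lt b c \<longrightarrow> lt a c"
    unfolding comp_poset_def by blast+
  from cp obtain rl where rl0: "\<forall>m n. evalr rl [m, n] (if lt (\<rho> m) (\<rho> n) then 1 else 0)"
    unfolding comp_poset_def by blast
  define L where "L m n = (if lt (\<rho> m) (\<rho> n) then 1 else (0::nat))" for m n
  have rl: "evalr rl [m, n] (L m n)" for m n using rl0 unfolding L_def by blast
  have rinv: "\<rho> (inv \<rho> d) = d" for d using bij by (simp add: bij_is_surj surj_f_inv_f)
  have rinj: "\<rho> a = \<rho> b \<longleftrightarrow> a = b" for a b using bij by (metis bij_pointE)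
  have nx: "\<exists>n. L m n \<noteq> 0" for m
  proof -
    obtain e where "lt (\<rho> m) e" using nomax by blast
    then have "lt (\<rho> m) (\<rho> (inv \<rho> e))" using rinv by simp
    then show ?thesis unfolding L_def by (intro exI[of _ "inv \<rho> e"]) simp
  qed
  define nxc where "nxc m = (LEAST n. L m n \<noteq> 0)" for m
  have st: "lt (\<rho> m) (\<rho> (nxc m))" for m
    using LeastI_ex[OF nx[of m]] unfolding nxc_def L_def by (auto split: if_splits)
  note clt = chain_lt[where nx=nxc and lt=lt and \<rho>=\<rho>, OF tr st]
  from FR obtain G Z where pG: "pcomp_on X \<rho> G" and sZ: "sigma1_pi1 X Z"
    and FG: "\<forall>x\<in>space X. F x = (if x \<in> Z then G x else None)" unfolding RestrPC_def by blast
  from pG obtain rG where rG: "\<forall>x\<in>space X. \<forall>y. evalr rG [code x] y \<longleftrightarrow> G x = Some (\<rho> y)"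
    unfolding pcomp_on_def by blast
  from sZ obtain R S where cR: "comprel2_on X R" and cS: "comprel2_on X S"
    and Zi: "\<forall>x\<in>space X. x \<in> Z \<longleftrightarrow> (\<exists>t. R x t) \<and> (\<forall>t. S x t)" unfolding sigma1_pi1_def by blast
  from cR obtain rR where rR: "\<forall>x\<in>space X. \<forall>t. evalr rR [code x, t] (if R x t then 1 else 0)"
    unfolding comprel2_on_def by blast
  from cS obtain rS where rS: "\<forall>x\<in>space X. \<forall>t. evalr rS [code x, t] (if S x t then 1 else 0)"
    unfolding comprel2_on_def by blast
  define f where "f x t = (case G x of None \<Rightarrow> None | Some d \<Rightarrow>
      if \<forall>t'\<le>t. S x t' then (if \<exists>t'\<le>t. R x t' then Some d else None)
      else Some (\<rho> ((nxc ^^ Suc t) (inv \<rho> d))))" for x t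
  have pf: "pcomp2_on X \<rho> f"
    unfolding pcomp2_on_def
  proof (intro exI[of _ "fp rG rR rS rl"] ballI allI)
    fix x t z assume x: "x \<in> space X"
    let ?Gc = "map_option (inv \<rho>) (G x)"
    have hG: "evalr rG [code x] y \<longleftrightarrow> ?Gc = Some y" for y
    proof -
      have "G x = Some (\<rho> y) \<longleftrightarrow> ?Gc = Some y"
        using rinv bij_inv_eq_iff[OF bij, of y] by (cases "G x") (auto simp: bij_is_inj[OF bij])
      then show ?thesis using rG x by blast
    qed
    have e: "evalr (fp rG rR rS rl) [code x, t] z \<longleftrightarrow>
      (\<exists>y. ?Gc = Some y \<and> ((\<forall>t'\<le>t. S x t') \<longrightarrow> (\<exists>t'\<le>t. R x t')) \<and>
       z = (if \<forall>t'\<le>t. S x t' then y else (nxc ^^ Suc t) y))"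
      unfolding nxc_def
      by (rule ev_fp[OF rl nx hG]) (use rR rS x in blast)+
    show "evalr (fp rG rR rS rl) [code x, t] z \<longleftrightarrow> f x t = Some (\<rho> z)"
    proof (cases "G x")
      case None then show ?thesis unfolding e f_def by simp
    next
      case (Some a)
      have "a = \<rho> z \<longleftrightarrow> inv \<rho> a = z" using bij_inv_eq_iff[OF bij, of z a] by auto
      then show ?thesis unfolding e f_def using Some
        by (cases "\<forall>t'\<le>t. S x t'"; cases "\<exists>t'\<le>t. R x t'") (auto simp: rinj)
    qed
  qed
  have incf: "incr_on X lt f"
    unfolding incr_on_def
  proof (intro ballI allI impI)
    fix x t t' d d' assume x: "x \<in> space X" and tt: "t \<le> t'" and fd: "f x t = Some d" and fd': "f x t' = Some d'"
    then obtain dG where G: "G x = Some dG" unfolding f_def by (cases "G x") auto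
    let ?y = "inv \<rho> dG"
    have dG: "dG = \<rho> ((nxc ^^ 0) ?y)" using rinv by simp
    show "d = d' \<or> lt d d'"
    proof (cases "\<forall>t''\<le>t'. S x t''")
      case True
      then have "\<forall>t''\<le>t. S x t''" using tt by auto
      then show ?thesis using True fd fd' G unfolding f_def by (auto split: if_splits)
    next
      case False
      then have c: "(\<forall>t''\<le>t'. S x t'') = False" by blast
      have d': "d' = \<rho> ((nxc ^^ Suc t') ?y)" using fd' G unfolding f_def c by (simp del: funpow.simps)
      show ?thesis
      proof (cases "\<forall>t''\<le>t. S x t''")
        case True
        then have "d = dG" using fd G unfolding f_def by (auto split: if_splits)
        then show ?thesis using d' dG clt[of 0 "Suc t'" ?y] by simp
      next
        case False
        then have c: "(\<forall>t''\<le>t. S x t'') = False" by blast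
        have d: "d = \<rho> ((nxc ^^ Suc t) ?y)" using fd G unfolding f_def c by (simp del: funpow.simps)
        show ?thesis
        proof (cases "t = t'")
          case True then show ?thesis using d d' by simp
        next
          case False then have "Suc t < Suc t'" using tt by simp
          then show ?thesis using d d' clt by blast
        qed
      qed
    qed
  qed
  have main: "F x = maxD lt f x" if x: "x \<in> space X" for x
  proof -
    let ?S = "{d. \<exists>t. f x t = Some d}"
    have none: "maxD lt f x = None" if "\<not> finite ?S \<or> ?S = {}"
      using that unfolding maxD_def Let_def by auto
    have incx: "\<forall>t t' d d'. t \<le> t' \<longrightarrow> f x t = Some d \<longrightarrow> f x t' = Some d' \<longrightarrow> d = d' \<or> lt d d'"
      using incf x unfolding incr_on_def by blast
    show ?thesis
    proof (cases "G x")
      case None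
      then have "?S = {}" unfolding f_def by auto
      then show ?thesis using none FG x None by simp
    next
      case (Some dG)
      let ?y = "inv \<rho> dG"
      show ?thesis
      proof (cases "\<forall>t. S x t")
        case allS: True
        show ?thesis
        proof (cases "\<exists>t. R x t")
          case True
          then obtain t0 where t0: "R x t0" by blast
          have inZ: "x \<in> Z" using Zi x allS True by blast
          have f0: "f x t0 = Some dG" using Some allS t0 unfolding f_def by auto
          have "maxD lt f x = Some dG"
            by (rule maxD_eq[where f=f and x=x, OF irr tr incx f0])
               (use Some allS in \<open>auto simp: f_def split: if_splits\<close>)
          then show ?thesis using FG x inZ Some by simp
        next
          case False
          then have "?S = {}" using Some allS unfolding f_def by auto
          moreover have "x \<notin> Z" using Zi x False by blast
          ultimately show ?thesis using none FG x by simp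
        qed
      next
        case False
        then obtain t0 where t0: "\<not> S x t0" by blast
        have "x \<notin> Z" using Zi x False by blast
        let ?h = "\<lambda>t. \<rho> ((nxc ^^ Suc t) ?y)"
        have sub: "?h ` {t0..} \<subseteq> ?S"
        proof
          fix d assume "d \<in> ?h ` {t0..}"
          then obtain t where t: "t0 \<le> t" "d = ?h t" by auto
          then have c: "(\<forall>t'\<le>t. S x t') = False" using t0 by blast
          have "f x t = Some d" using Some t unfolding f_def c by (simp del: funpow.simps)
          then show "d \<in> ?S" by blast
        qed
        have inj: "inj_on ?h {t0..}"
        proof (rule inj_onI)
          fix a b assume "?h a = ?h b"
          then show "a = b" using clt[of "Suc a" "Suc b" ?y] clt[of "Suc b" "Suc a" ?y] irr
            by (metis linorder_neqE_nat Suc_less_eq)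
        qed
        have "\<not> finite ?S"
        proof
          assume "finite ?S"
          then have "finite (?h ` {t0..})" using sub finite_subset by blast
          then have "finite {t0..}" using inj finite_imageD by blast
          then show False using infinite_Ici by blast
        qed
        then show ?thesis using none FG x \<open>x \<notin> Z\<close> by simp
      qed
    qed
  qed
  show ?thesis unfolding MaxPR_def using pf incf main by blast
qed



theorem mainTheorem9:
  fixes X :: "bcomp list" and lt :: "'d \<Rightarrow> 'd \<Rightarrow> bool" and \<rho> :: "nat \<Rightarrow> 'd"
  assumes "basic_space X" and "comp_poset lt \<rho>"
  shows "(MaxPR X lt \<rho> \<inter> MinPR X lt \<rho> \<subseteq> RestrPC X \<rho>)
    \<and> (\<forall>F \<in> MaxPR X lt \<rho> \<inter> MinPR X lt \<rho>.
          (\<forall>x\<in>space X. F x \<noteq> None) \<longrightarrow> pcomp_on X \<rho> F)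
    \<and> ((\<forall>d. \<exists>e. lt d e) \<longrightarrow> RestrPC X \<rho> \<subseteq> MaxPR X lt \<rho>)
    \<and> ((\<forall>d. \<exists>e. lt e d) \<longrightarrow> RestrPC X \<rho> \<subseteq> MinPR X lt \<rho>)
    \<and> ((\<forall>d. \<exists>e. lt d e) \<and> (\<forall>d. \<exists>e. lt e d) \<longrightarrow>
          MaxPR X lt \<rho> \<inter> MinPR X lt \<rho> = RestrPC X \<rho>)"
proof -
  have c1: "MaxPR X lt \<rho> \<inter> MinPR X lt \<rho> \<subseteq> RestrPC X \<rho>"
    using part1[OF assms(2)] by blast
  have c2: "\<forall>F \<in> MaxPR X lt \<rho> \<inter> MinPR X lt \<rho>. (\<forall>x\<in>space X. F x \<noteq> None) \<longrightarrow> pcomp_on X \<rho> F"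
  proof (intro ballI impI)
    fix F assume "F \<in> MaxPR X lt \<rho> \<inter> MinPR X lt \<rho>" and tot: "\<forall>x\<in>space X. F x \<noteq> None"
    then have "F \<in> RestrPC X \<rho>" using c1 by blast
    then obtain G Z where pG: "pcomp_on X \<rho> G" and FG: "\<forall>x\<in>space X. F x = (if x \<in> Z then G x else None)"
      unfolding RestrPC_def by blast
    have "\<forall>x\<in>space X. F x = G x" using FG tot by (metis)
    then show "pcomp_on X \<rho> F" using pG unfolding pcomp_on_def by simp
  qed
  have c3: "(\<forall>d. \<exists>e. lt d e) \<longrightarrow> RestrPC X \<rho> \<subseteq> MaxPR X lt \<rho>"
    using part3[OF assms(2)] by blast
  have c4: "(\<forall>d. \<exists>e. lt e d) \<longrightarrow> RestrPC X \<rho> \<subseteq> MinPR X lt \<rho>"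
    unfolding MinPR_flip using part3[OF comp_poset_flip[OF assms(2)]] by blast
  have c5: "(\<forall>d. \<exists>e. lt d e) \<and> (\<forall>d. \<exists>e. lt e d) \<longrightarrow>
          MaxPR X lt \<rho> \<inter> MinPR X lt \<rho> = RestrPC X \<rho>"
    using c1 c3 c4 by blast
  show ?thesis using c1 c2 c3 c4 c5 by blast
qed


end
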